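(* Let $N=2^n$ and let $C=\sum_{k=0}^{d}c_k\mathcal{P}^k$ be an $N\times N$ circulant matrix. Then $C$, normalized by $K=\max_{z\in\mathbb{T}}|\sum_{k=0}^d c_kz^k|$ (i.e. $C/K$), can be implemented (as the top-left block, with respect to one ancilla qubit, of a unitary circuit) using $\mathcal{O}(d\log N+\log^2N)$ 1- and 2-qubit gates.
   Context: $\mathbb{T}=\{z\in\mathbb{C}:|z|=1\}$. $\mathcal{P}=\sum_{j=0}^{N-1}|j+1 \bmod N\rangle\langle j|$ is the cyclic permutation (cyclic shift) matrix on $n$ qubits. Gates are arbitrary 1- and 2-qubit unitaries. *)

theory Defs
  imports Complex_Main
begin

text \<open>Matrices of size m x m are represented as functions nat => nat => complex;
  only entries with indices < m are meaningful. A register of q qubits has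
  dimension 2^q; bit b of a basis index j is (j div 2^b) mod 2.\<close>

type_synonym cmat = "nat \<Rightarrow> nat \<Rightarrow> complex"

definition mat_mult :: "nat \<Rightarrow> cmat \<Rightarrow> cmat \<Rightarrow> cmat" where
  "mat_mult m A B = (\<lambda>i j. \<Sum>k<m. A i k * B k j)"

definition mat_id :: "nat \<Rightarrow> cmat" where
  "mat_id m = (\<lambda>i j. if i < m \<and> j < m \<and> i = j then 1 else 0)"

fun mat_pow :: "nat \<Rightarrow> cmat \<Rightarrow> nat \<Rightarrow> cmat" where
  "mat_pow m A 0 = mat_id m"
| "mat_pow m A (Suc k) = mat_mult m A (mat_pow m A k)"

definition unitary_mat :: "nat \<Rightarrow> cmat \<Rightarrow> bool" where
  "unitary_mat m U \<longleftrightarrow>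
     (\<forall>i<m. \<forall>j<m. (\<Sum>k<m. cnj (U k i) * U k j) = (if i = j then 1 else 0))"

definition bit :: "nat \<Rightarrow> nat \<Rightarrow> nat" where
  "bit b j = (j div 2 ^ b) mod 2"

definition one_qubit_gate :: "nat \<Rightarrow> nat \<Rightarrow> cmat \<Rightarrow> cmat" where
  "one_qubit_gate q a U = (\<lambda>i j.
     if i < 2 ^ q \<and> j < 2 ^ q \<and> (\<forall>b<q. b \<noteq> a \<longrightarrow> bit b i = bit b j)
     then U (bit a i) (bit a j) else 0)"

definition two_qubit_gate :: "nat \<Rightarrow> nat \<Rightarrow> nat \<Rightarrow> cmat \<Rightarrow> cmat" where
  "two_qubit_gate q a b U = (\<lambda>i j.
     if i < 2 ^ q \<and> j < 2 ^ q \<and> (\<forall>c<q. c \<noteq> a \<longrightarrow> c \<noteq> b \<longrightarrow> bit c i = bit c j)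
     then U (2 * bit a i + bit b i) (2 * bit a j + bit b j) else 0)"

definition elementary_gate :: "nat \<Rightarrow> cmat \<Rightarrow> bool" where
  "elementary_gate q G \<longleftrightarrow>
     (\<exists>a U. a < q \<and> unitary_mat 2 U \<and> G = one_qubit_gate q a U) \<or>
     (\<exists>a b U. a < q \<and> b < q \<and> a \<noteq> b \<and> unitary_mat 4 U \<and> G = two_qubit_gate q a b U)"

definition circuit_matrix :: "nat \<Rightarrow> cmat list \<Rightarrow> cmat" where
  "circuit_matrix q gs = foldr (mat_mult (2 ^ q)) gs (mat_id (2 ^ q))"

definition cyc_shift :: "nat \<Rightarrow> cmat" where
  "cyc_shift N = (\<lambda>i j. if i < N \<and> j < N \<and> i = (j + 1) mod N then 1 else 0)"

definition circulant :: "nat \<Rightarrow> nat \<Rightarrow> (nat \<Rightarrow> complex) \<Rightarrow> cmat" where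
  "circulant N d c = (\<lambda>i j. \<Sum>k\<le>d. c k * mat_pow N (cyc_shift N) k i j)"

definition circ_norm :: "nat \<Rightarrow> (nat \<Rightarrow> complex) \<Rightarrow> real" where
  "circ_norm d c = (SUP z\<in>{z::complex. cmod z = 1}. cmod (\<Sum>k\<le>d. c k * z ^ k))"

end

theory Submission
  imports Defs "HOL-Computational_Algebra.Fundamental_Theorem_Algebra"
begin


section \<open>Bits\<close>

lemma bit_lt2[simp]: "bit b i < 2" by (simp add: bit_def)

lemma bit_01: "bit b i = 0 \<or> bit b i = 1" unfolding bit_def by presburger

lemma mod_pow_Suc: "i mod 2^(Suc n) = i mod 2^n + bit n i * 2^n"
proof -
  have "i mod (2^n*2) = 2^n * (i div 2^n mod 2) + i mod 2^n" by (rule mod_mult2_eq)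
  then show ?thesis by (simp add: bit_def power_Suc2 mult.commute)
qed

lemma bin_expand: "i mod 2^n = (\<Sum>l<n. bit l i * 2^l)"
proof (induction n)
  case (Suc n)
  show ?case using mod_pow_Suc[of i n] Suc by simp
qed simp

lemma bin_expand': "i < (2::nat)^n \<Longrightarrow> i = (\<Sum>l<n. bit l i * 2^l)"
  using bin_expand[of i n] by simp

lemma bits_eq: "i < 2^q \<Longrightarrow> k < 2^q \<Longrightarrow> (\<forall>b<q. bit b i = bit b k) \<Longrightarrow> i = k"
  using bin_expand'[of i q] bin_expand'[of k q] by (metis (no_types, lifting) lessThan_iff sum.cong)

lemma bit_mod: "b < n \<Longrightarrow> bit b (i mod 2^n) = bit b i"
proof -
  assume "b < n"
  then have e: "(2::nat)^n = 2^b * 2^(n-b)" by (simp flip: power_add)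
  have "(i mod 2^n) div 2^b = i div 2^b mod 2^(n-b)"
    unfolding e mod_mult2_eq by simp
  moreover have "(2::nat) dvd 2^(n-b)" using \<open>b<n\<close> by simp
  ultimately show ?thesis unfolding bit_def by (simp add: mod_mod_cancel)
qed

lemma bit_div: "bit b (i div 2^n) = bit (b+n) i"
proof -
  have "i div 2^(b+n) = i div 2^n div 2^b" by (simp add: power_add div_mult2_eq mult.commute flip: div_mult2_eq)
  then show ?thesis by (simp add: bit_def)
qed

lemma bit_ge: "i < 2^n \<Longrightarrow> n \<le> b \<Longrightarrow> bit b i = 0"
proof -
  assume "i < 2^n" "n \<le> b"
  then have "i < 2^b" by (meson order_less_le_trans one_le_numeral power_increasing)
  then show ?thesis by (simp add: bit_def)
qed

definition setb :: "nat \<Rightarrow> nat \<Rightarrow> nat \<Rightarrow> nat" where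
  "setb a x i = i mod 2^a + x * 2^a + (i div 2^(Suc a)) * 2^(Suc a)"

lemma setb_self: "setb a (bit a i) i = i"
proof -
  have "i = i mod 2^(Suc a) + (i div 2^(Suc a)) * 2^(Suc a)" by (metis mod_div_mult_eq)
  then show ?thesis unfolding setb_def mod_pow_Suc by simp
qed

lemma bit_compose:
  assumes "L < 2^a" "x < 2"
  shows "bit b (L + x * 2^a + H * 2^(Suc a)) =
     (if b < a then bit b L else if b = a then x else bit (b - a - 1) H)"
proof -
  define T where "T = L + x * 2^a + H * 2^(Suc a)"
  have T2: "T = L + 2^a * (x + 2 * H)" unfolding T_def by (simp add: algebra_simps)
  show ?thesis
  proof (cases "b < a")
    case True
    have "T mod 2^a = L" unfolding T2 using assms by simp
    then have "bit b T = bit b L" using bit_mod[OF True, of T] by simp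
    then show ?thesis using True T_def by simp
  next
    case False
    have d: "T div 2^a = x + 2 * H" unfolding T2 using assms by simp
    have "bit b T = bit (b - a) (T div 2^a)" using bit_div[of "b-a" T a] False by simp
    also have "\<dots> = bit (b-a) (x + 2*H)" using d by simp
    finally have bT: "bit b T = bit (b-a) (x + 2*H)" .
    show ?thesis
    proof (cases "b = a")
      case True
      then show ?thesis using bT assms T_def by (simp add: bit_def)
    next
      case False
      then have "b - a = Suc (b - a - 1)" using \<open>\<not> b < a\<close> by simp
      then have "bit (b-a) (x + 2*H) = bit (b - a - 1) H"
        using bit_div[of "b-a-1" "x+2*H" 1] assms by (simp add: bit_def)
      then show ?thesis using bT False \<open>\<not> b < a\<close> T_def by simp
    qed
  qed
qed

lemma bit_setb: "x < 2 \<Longrightarrow> bit b (setb a x i) = (if b = a then x else bit b i)"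
proof -
  assume x: "x < 2"
  have L: "i mod 2^a < 2^a" by simp
  have "bit b (setb a x i) = (if b < a then bit b (i mod 2^a) else if b = a then x else bit (b - a - 1) (i div 2^(Suc a)))"
    unfolding setb_def by (rule bit_compose[OF L x])
  moreover have "bit b i = (if b < a then bit b (i mod 2^a) else if b = a then bit a i else bit (b - a - 1) (i div 2^(Suc a)))"
    using bit_compose[OF L bit_lt2[of a i], of b "i div 2^(Suc a)"] setb_self[of a i] unfolding setb_def by simp
  ultimately show ?thesis by auto
qed

lemma setb_lt: assumes "i < 2^q" "a < q" "x < 2" shows "setb a x i < 2^q"
proof -
  define H where "H = i div 2^(Suc a)"
  have e: "(2::nat)^q = 2^(q - Suc a) * 2^(Suc a)" using assms by (metis Suc_leI le_add_diff_inverse2 power_add)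
  have "H < 2^(q - Suc a)" unfolding H_def using assms e
    by (metis div_less_iff_less_mult zero_less_numeral zero_less_power)
  then have "H + 1 \<le> 2^(q - Suc a)" by simp
  then have h: "(H + 1) * 2^(Suc a) \<le> 2^q" by (subst e) (rule mult_le_mono1)
  have "x * 2^a \<le> 1 * 2^a" using assms by (intro mult_le_mono1) simp
  then have "x * 2^a \<le> 2^a" by simp
  moreover have "i mod 2^a < 2^a" by simp
  ultimately have "i mod 2^a + x * 2^a < 2^(Suc a)" by (simp only: power_Suc)
  then have "setb a x i < (H + 1) * 2^(Suc a)" unfolding setb_def H_def by (simp add: algebra_simps)
  with h show ?thesis by simp
qed


definition rbd :: "nat \<Rightarrow> cmat \<Rightarrow> bool" where "rbd m A \<longleftrightarrow> (\<forall>i j. m \<le> i \<longrightarrow> A i j = 0)"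
definition cbd :: "nat \<Rightarrow> cmat \<Rightarrow> bool" where "cbd m A \<longleftrightarrow> (\<forall>i j. m \<le> j \<longrightarrow> A i j = 0)"
definition adjm :: "cmat \<Rightarrow> cmat" where "adjm A = (\<lambda>i j. cnj (A j i))"

lemma mat_mult_assoc: "mat_mult m A (mat_mult m B C) = mat_mult m (mat_mult m A B) C"
proof (intro ext)
  fix i j
  show "mat_mult m A (mat_mult m B C) i j = mat_mult m (mat_mult m A B) C i j"
    unfolding mat_mult_def by (simp add: sum_distrib_left sum_distrib_right mult.assoc) (rule sum.swap)
qed

lemma mat_id_left: "rbd m Y \<Longrightarrow> mat_mult m (mat_id m) Y = Y"
proof (intro ext)
  fix i j assume Y: "rbd m Y"
  have "(\<Sum>k<m. mat_id m i k * Y k j) = (\<Sum>k<m. if k = i then (if i<m then Y i j else 0) else 0)"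
    by (rule sum.cong) (auto simp: mat_id_def)
  then show "mat_mult m (mat_id m) Y i j = Y i j"
    using Y by (simp add: mat_mult_def rbd_def)
qed

lemma mat_id_right: "cbd m Y \<Longrightarrow> mat_mult m Y (mat_id m) = Y"
proof (intro ext)
  fix i j assume Y: "cbd m Y"
  have "(\<Sum>k<m. Y i k * mat_id m k j) = (\<Sum>k<m. if k = j then (if j<m then Y i j else 0) else 0)"
    by (rule sum.cong) (auto simp: mat_id_def)
  then show "mat_mult m Y (mat_id m) i j = Y i j"
    using Y by (simp add: mat_mult_def cbd_def)
qed

lemma circuit_single: "cbd (2^q) g \<Longrightarrow> circuit_matrix q [g] = g"
  by (simp add: circuit_matrix_def mat_id_right)

lemma rbd_mult: "rbd m A \<Longrightarrow> rbd m (mat_mult m A B)"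
  by (simp add: rbd_def mat_mult_def)
lemma cbd_mult: "cbd m B \<Longrightarrow> cbd m (mat_mult m A B)"
  by (simp add: cbd_def mat_mult_def)
lemma rbd_id: "rbd m (mat_id m)" by (simp add: rbd_def mat_id_def)
lemma cbd_id: "cbd m (mat_id m)" by (simp add: cbd_def mat_id_def)

lemma rbd_foldr: "(\<forall>g\<in>set gs. rbd m g) \<Longrightarrow> rbd m (foldr (mat_mult m) gs (mat_id m))"
  by (induction gs) (auto simp: rbd_id rbd_mult)
lemma cbd_foldr: "cbd m Y \<Longrightarrow> cbd m (foldr (mat_mult m) gs Y)"
  by (induction gs) (auto simp: cbd_mult)

lemma foldr_mult: "rbd m Y \<Longrightarrow> foldr (mat_mult m) xs Y = mat_mult m (foldr (mat_mult m) xs (mat_id m)) Y"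
proof (induction xs)
  case Nil
  then show ?case by (simp add: mat_id_left)
next
  case (Cons g xs)
  then show ?case by (simp add: mat_mult_assoc)
qed

lemma circuit_append: "(\<forall>g\<in>set ys. rbd (2^q) g) \<Longrightarrow>
  circuit_matrix q (xs @ ys) = mat_mult (2^q) (circuit_matrix q xs) (circuit_matrix q ys)"
  unfolding circuit_matrix_def by (simp add: foldr_mult rbd_foldr)

lemma rbd_one: "rbd (2^q) (one_qubit_gate q a U)" by (simp add: rbd_def one_qubit_gate_def)
lemma cbd_one: "cbd (2^q) (one_qubit_gate q a U)" by (simp add: cbd_def one_qubit_gate_def)
lemma rbd_two: "rbd (2^q) (two_qubit_gate q a b U)" by (simp add: rbd_def two_qubit_gate_def)
lemma cbd_two: "cbd (2^q) (two_qubit_gate q a b U)" by (simp add: cbd_def two_qubit_gate_def)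

lemma adjm_mult: "adjm (mat_mult m A B) = mat_mult m (adjm B) (adjm A)"
  by (intro ext) (simp add: adjm_def mat_mult_def mult.commute)

lemma adjm_id: "adjm (mat_id m) = mat_id m"
  by (intro ext) (auto simp: adjm_def mat_id_def)

lemma rbd_adjm: "cbd m A \<Longrightarrow> rbd m (adjm A)" by (simp add: rbd_def cbd_def adjm_def)
lemma cbd_adjm: "rbd m A \<Longrightarrow> cbd m (adjm A)" by (simp add: rbd_def cbd_def adjm_def)

lemma circuit_adj: "(\<forall>g\<in>set gs. rbd (2^q) g \<and> cbd (2^q) g) \<Longrightarrow>
   adjm (circuit_matrix q gs) = circuit_matrix q (rev (map adjm gs))"
proof (induction gs)
  case Nil
  then show ?case by (simp add: circuit_matrix_def adjm_id)
next
  case (Cons g gs)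
  have IH: "adjm (circuit_matrix q gs) = circuit_matrix q (rev (map adjm gs))" using Cons by simp
  have g: "rbd (2^q) g" "cbd (2^q) g" using Cons.prems by auto
  have "adjm (circuit_matrix q (g # gs)) = mat_mult (2^q) (adjm (circuit_matrix q gs)) (adjm g)"
    by (simp add: circuit_matrix_def adjm_mult)
  also have "\<dots> = mat_mult (2^q) (circuit_matrix q (rev (map adjm gs))) (circuit_matrix q [adjm g])"
    using g by (simp add: IH circuit_single cbd_adjm)
  also have "\<dots> = circuit_matrix q (rev (map adjm gs) @ [adjm g])"
    using g by (simp add: circuit_append rbd_adjm)
  finally show ?case by simp
qed

lemma adjm_one: "adjm (one_qubit_gate q a U) = one_qubit_gate q a (adjm U)"
  by (intro ext) (auto simp: adjm_def one_qubit_gate_def)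

lemma adjm_two: "adjm (two_qubit_gate q a b U) = two_qubit_gate q a b (adjm U)"
  by (intro ext) (auto simp: adjm_def two_qubit_gate_def)

section \<open>Gate action\<close>

lemma one_gate_mult:
  assumes "a < q" "i < 2^q"
  shows "mat_mult (2^q) (one_qubit_gate q a U) M i j = (\<Sum>x<2. U (bit a i) x * M (setb a x i) j)"
proof -
  define S where "S = {setb a 0 i, setb a 1 i}"
  have neq: "setb a 0 i \<noteq> setb a 1 i" using bit_setb[of 0 a a i] bit_setb[of 1 a a i] by auto
  have sub: "S \<subseteq> {..<2^q}" unfolding S_def using setb_lt[OF assms(2,1)] by auto
  let ?f = "\<lambda>k. one_qubit_gate q a U i k * M k j"
  have z: "\<forall>k\<in>{..<2^q} - S. ?f k = 0"
  proof
    fix k assume k: "k \<in> {..<2^q} - S"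
    show "?f k = 0"
    proof (cases "\<forall>b<q. b \<noteq> a \<longrightarrow> bit b i = bit b k")
      case True
      have "k = setb a (bit a k) i"
        apply (rule bits_eq[of _ q])
        using k setb_lt[OF assms(2,1) bit_lt2[of a k]] True by (auto simp: bit_setb)
      moreover have "bit a k = 0 \<or> bit a k = 1" by (rule bit_01)
      ultimately have "k \<in> S" unfolding S_def by auto
      then show ?thesis using k by simp
    next
      case False
      have "one_qubit_gate q a U i k = 0" unfolding one_qubit_gate_def
        by (rule if_not_P) (use False in auto)
      then show ?thesis by simp
    qed
  qed
  have "mat_mult (2^q) (one_qubit_gate q a U) M i j = sum ?f S"
    unfolding mat_mult_def by (rule sum.mono_neutral_right[OF _ sub z]) simp
  also have "\<dots> = ?f (setb a 0 i) + ?f (setb a 1 i)" unfolding S_def using neq by simp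
  also have "\<dots> = (\<Sum>x<2. U (bit a i) x * M (setb a x i) j)"
    using assms setb_lt[OF assms(2,1)]
    by (simp add: numeral_2_eq_2 one_qubit_gate_def bit_setb)
  finally show ?thesis .
qed

lemma two_gate_diag:
  assumes "a < q" "b < q" "a \<noteq> b" "i < 2^q" "\<And>x y. x \<noteq> y \<Longrightarrow> U x y = 0"
  shows "mat_mult (2^q) (two_qubit_gate q a b U) M i j = U (2*bit a i + bit b i) (2*bit a i + bit b i) * M i j"
proof -
  let ?f = "\<lambda>k. two_qubit_gate q a b U i k * M k j"
  have z: "\<forall>k\<in>{..<2^q} - {i}. ?f k = 0"
  proof
    fix k assume k: "k \<in> {..<2^q} - {i}"
    show "?f k = 0"
    proof (cases "\<forall>c<q. c \<noteq> a \<longrightarrow> c \<noteq> b \<longrightarrow> bit c i = bit c k")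
      case True
      have "2*bit a i + bit b i \<noteq> 2*bit a k + bit b k"
      proof
        assume h: "2*bit a i + bit b i = 2*bit a k + bit b k"
        have "bit a i = bit a k \<and> bit b i = bit b k"
          using h bit_01[of a i] bit_01[of b i] bit_01[of a k] bit_01[of b k] by auto
        then have "\<forall>c<q. bit c i = bit c k" using True by metis
        then have "i = k" using bits_eq[of i q k] k assms by auto
        then show False using k by simp
      qed
      then show ?thesis by (simp add: two_qubit_gate_def assms(5))
    next
      case False
      have "two_qubit_gate q a b U i k = 0" unfolding two_qubit_gate_def
        by (rule if_not_P) (use False in auto)
      then show ?thesis by simp
    qed
  qed
  have "mat_mult (2^q) (two_qubit_gate q a b U) M i j = sum ?f {i}"
    unfolding mat_mult_def by (rule sum.mono_neutral_right[OF _ _ z]) (use assms in auto)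
  also have "\<dots> = U (2*bit a i + bit b i) (2*bit a i + bit b i) * M i j"
    using assms by (simp add: two_qubit_gate_def)
  finally show ?thesis .
qed


definition zeta :: "nat \<Rightarrow> complex" where "zeta n = cis (- 2 * pi / 2^n)"
definition sq :: complex where "sq = complex_of_real (1 / sqrt 2)"
definition Hd :: cmat where "Hd = (\<lambda>x y. (if x = 1 \<and> y = 1 then -1 else 1) * sq)"
definition CP :: "complex \<Rightarrow> cmat" where "CP \<phi> = (\<lambda>x y. if x = y then (if x = 3 then \<phi> else 1) else 0)"

lemma zeta_N: "zeta n ^ (2^n) = 1"
proof -
  have "real (2^n) * (- 2 * pi / 2^n) = - 2 * pi" by simp
  then show ?thesis unfolding zeta_def DeMoivre by (simp add: complex_eq_iff)
qed

lemma zeta_mult_N: "zeta n ^ (a * 2^n) = 1"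
  by (metis mult.commute power_mult zeta_N power_one)

lemma zeta_half: "n \<ge> 1 \<Longrightarrow> zeta n ^ (2^(n-1)) = -1"
proof -
  assume "n \<ge> 1"
  then have e: "(2::real)^n = 2 * 2^(n-1)" by (metis One_nat_def Suc_diff_le diff_Suc_1 power_Suc)
  have "real (2^(n-1)) * (- 2 * pi / 2^n) = - pi" unfolding e by simp
  then show ?thesis unfolding zeta_def DeMoivre by (simp add: complex_eq_iff)
qed

definition Eexp :: "nat \<Rightarrow> nat \<Rightarrow> nat \<Rightarrow> nat \<Rightarrow> nat" where
  "Eexp n b u k = (\<Sum>m\<in>{b..<u}. bit m k * 2^(n - 1 - m + b))"

definition Sp :: "nat \<Rightarrow> nat \<Rightarrow> cmat" where
  "Sp n b = (\<lambda>i k. if i < 2^Suc n \<and> k < 2^Suc n \<and> (\<forall>l. b \<le> l \<and> l < Suc n \<longrightarrow> bit l i = bit l k)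
     then (\<Prod>l<b. zeta n ^ (bit l i * Eexp n l n k)) * sq^b else 0)"

definition Sm :: "nat \<Rightarrow> nat \<Rightarrow> nat \<Rightarrow> cmat" where
  "Sm n b u = (\<lambda>i k. if i < 2^Suc n \<and> k < 2^Suc n \<and> (\<forall>l. b < l \<and> l < Suc n \<longrightarrow> bit l i = bit l k)
     then (\<Prod>l<b. zeta n ^ (bit l i * Eexp n l n k)) * zeta n ^ (bit b i * Eexp n b u k) * sq^(Suc b) else 0)"

lemma Sp0: "Sp n 0 = mat_id (2^Suc n)"
proof (intro ext)
  fix i k
  show "Sp n 0 i k = mat_id (2^Suc n) i k"
  proof (cases "i < 2^Suc n \<and> k < 2^Suc n")
    case True
    have "(\<forall>l. 0 \<le> l \<and> l < Suc n \<longrightarrow> bit l i = bit l k) \<longleftrightarrow> i = k"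
      using bits_eq[of i "Suc n" k] True by auto
    then show ?thesis using True by (simp add: Sp_def mat_id_def)
  qed (auto simp: Sp_def mat_id_def)
qed

lemma cond_setb:
  assumes "x < 2"
  shows "(\<forall>l. b \<le> l \<and> l < Q \<longrightarrow> bit l (setb b x i) = bit l k) \<longleftrightarrow>
     (b < Q \<longrightarrow> x = bit b k) \<and> (\<forall>l. b < l \<and> l < Q \<longrightarrow> bit l i = bit l k)"
  using assms by (auto simp: bit_setb)

lemma prod_setb:
  assumes "x < 2"
  shows "(\<Prod>l<b. zeta n ^ (bit l (setb b x i) * Eexp n l n k)) = (\<Prod>l<b. zeta n ^ (bit l i * Eexp n l n k))"
  by (rule prod.cong) (use assms in \<open>auto simp: bit_setb\<close>)

lemma Sp_setb:
  assumes "i < 2^Suc n" "b < Suc n" "x < 2"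
  shows "Sp n b (setb b x i) k = (if x = bit b k then
        (if k < 2^Suc n \<and> (\<forall>l. b < l \<and> l < Suc n \<longrightarrow> bit l i = bit l k)
         then (\<Prod>l<b. zeta n ^ (bit l i * Eexp n l n k)) * sq^b else 0) else 0)"
proof -
  have "Sp n b (setb b x i) k = (if k < 2^Suc n \<and> ((b < Suc n \<longrightarrow> x = bit b k) \<and> (\<forall>l. b < l \<and> l < Suc n \<longrightarrow> bit l i = bit l k))
     then (\<Prod>l<b. zeta n ^ (bit l i * Eexp n l n k)) * sq^b else 0)"
    unfolding Sp_def by (simp only: setb_lt[OF assms] cond_setb[OF assms(3)] prod_setb[OF assms(3)] simp_thms)
  then show ?thesis using assms(2) by simp
qed

lemma Hd_val:
  assumes "n \<ge> 1" "b < n" "y < 2" "x < 2" and that: "x = bit b x'"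
  shows "Hd y x = zeta n ^ (y * Eexp n b (Suc b) x') * sq"
proof -
  have E: "Eexp n b (Suc b) x' = x * 2^(n-1)" unfolding Eexp_def using assms that by simp
  have "x = 0 \<or> x = 1" using that bit_01 by auto
  moreover have "y = 0 \<or> y = 1" using assms by auto
  ultimately show ?thesis unfolding E Hd_def using zeta_half[OF assms(1)] by auto
qed

lemma H_step:
  assumes "n \<ge> 1" "b < n"
  shows "mat_mult (2^Suc n) (one_qubit_gate (Suc n) b Hd) (Sp n b) = Sm n b (Suc b)"
proof (intro ext)
  fix i k
  show "mat_mult (2^Suc n) (one_qubit_gate (Suc n) b Hd) (Sp n b) i k = Sm n b (Suc b) i k"
  proof (cases "i < 2^Suc n")
    case False
    then show ?thesis using rbd_one[of "Suc n" b Hd] by (simp add: rbd_mult[unfolded rbd_def] rbd_def Sm_def)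
  next
    case True
    have bq: "b < Suc n" using assms by simp
    have "mat_mult (2^Suc n) (one_qubit_gate (Suc n) b Hd) (Sp n b) i k =
        (\<Sum>x<2. Hd (bit b i) x * Sp n b (setb b x i) k)"
      by (rule one_gate_mult[OF bq True])
    also have "\<dots> = (\<Sum>x<2. if x = bit b k then Hd (bit b i) x *
        (if k < 2^Suc n \<and> (\<forall>l. b < l \<and> l < Suc n \<longrightarrow> bit l i = bit l k)
         then (\<Prod>l<b. zeta n ^ (bit l i * Eexp n l n k)) * sq^b else 0) else 0)"
      by (rule sum.cong[OF refl]) (simp add: Sp_setb[OF True bq])
    also have "\<dots> = Hd (bit b i) (bit b k) *
        (if k < 2^Suc n \<and> (\<forall>l. b < l \<and> l < Suc n \<longrightarrow> bit l i = bit l k)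
         then (\<Prod>l<b. zeta n ^ (bit l i * Eexp n l n k)) * sq^b else 0)"
      by (simp add: sum.delta')
    also have "\<dots> = Sm n b (Suc b) i k"
    proof -
      have hv: "Hd (bit b i) (bit b k) = zeta n ^ (bit b i * Eexp n b (Suc b) k) * sq"
        by (rule Hd_val[OF assms]) auto
      show ?thesis unfolding Sm_def hv using True by (auto simp: ac_simps)
    qed
    finally show ?thesis .
  qed
qed

lemma CP_val: "CP \<phi> (2*bit b i + bit u i) (2*bit b i + bit u i) = \<phi>^(bit b i * bit u i)"
  using bit_01[of b i] bit_01[of u i] by (elim disjE) (simp_all add: CP_def)

lemma Eexp_Suc: "b \<le> u \<Longrightarrow> Eexp n b (Suc u) k = Eexp n b u k + bit u k * 2^(n-1-u+b)"
  unfolding Eexp_def by simp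

lemma P_step:
  assumes "b < u" "u < n"
  shows "mat_mult (2^Suc n) (two_qubit_gate (Suc n) b u (CP (zeta n ^ (2^(n-1-u+b))))) (Sm n b u) = Sm n b (Suc u)"
proof (intro ext)
  fix i k
  show "mat_mult (2^Suc n) (two_qubit_gate (Suc n) b u (CP (zeta n ^ (2^(n-1-u+b))))) (Sm n b u) i k = Sm n b (Suc u) i k"
  proof (cases "i < 2^Suc n")
    case False
    then show ?thesis using rbd_two[of "Suc n" b u]
      by (simp add: rbd_mult[unfolded rbd_def] rbd_def Sm_def)
  next
    case True
    have "mat_mult (2^Suc n) (two_qubit_gate (Suc n) b u (CP (zeta n ^ (2^(n-1-u+b))))) (Sm n b u) i k
       = CP (zeta n ^ (2^(n-1-u+b))) (2*bit b i + bit u i) (2*bit b i + bit u i) * Sm n b u i k"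
      by (rule two_gate_diag) (use assms True in \<open>auto simp: CP_def\<close>)
    also have "\<dots> = Sm n b (Suc u) i k"
    proof (cases "k < 2^Suc n \<and> (\<forall>l. b < l \<and> l < Suc n \<longrightarrow> bit l i = bit l k)")
      case True2: True
      then have bu: "bit u i = bit u k" using assms by auto
      have ez: "zeta n ^ (bit b i * Eexp n b (Suc u) k) =
         zeta n ^ (bit b i * Eexp n b u k) * (zeta n ^ (2^(n-1-u+b)))^(bit b i * bit u k)"
        unfolding Eexp_Suc[OF less_imp_le[OF assms(1)]] add_mult_distrib2 power_add
        by (simp add: power_mult[symmetric] ac_simps)
      show ?thesis unfolding CP_val using True True2 bu ez by (simp add: Sm_def ac_simps)
    next
      case False
      then show ?thesis using True by (auto simp: Sm_def)
    qed
    finally show ?thesis .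
  qed
qed

lemma Sm_Sp: "Sm n b n = Sp n (Suc b)"
  by (intro ext) (auto simp: Sm_def Sp_def Suc_le_eq ac_simps)

definition CPg :: "nat \<Rightarrow> nat \<Rightarrow> nat \<Rightarrow> cmat" where
  "CPg n b u = two_qubit_gate (Suc n) b u (CP (zeta n ^ (2^(n-1-u+b))))"
definition Hg :: "nat \<Rightarrow> nat \<Rightarrow> cmat" where
  "Hg n b = one_qubit_gate (Suc n) b Hd"
definition blockG :: "nat \<Rightarrow> nat \<Rightarrow> cmat list" where
  "blockG n b = Hg n b # map (CPg n b) [Suc b..<n]"
definition LG :: "nat \<Rightarrow> cmat list" where
  "LG n = concat (map (blockG n) [0..<n])"

lemma fold_phases:
  "b < u \<Longrightarrow> u \<le> n \<Longrightarrow> fold (mat_mult (2^Suc n)) (map (CPg n b) [u..<n]) (Sm n b u) = Sm n b n"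
proof (induction "n - u" arbitrary: u)
  case 0
  then show ?case by simp
next
  case (Suc x)
  then have un: "u < n" by simp
  have "fold (mat_mult (2^Suc n)) (map (CPg n b) [u..<n]) (Sm n b u)
      = fold (mat_mult (2^Suc n)) (map (CPg n b) [Suc u..<n]) (mat_mult (2^Suc n) (CPg n b u) (Sm n b u))"
    using un by (simp add: upt_conv_Cons)
  also have "\<dots> = fold (mat_mult (2^Suc n)) (map (CPg n b) [Suc u..<n]) (Sm n b (Suc u))"
    unfolding CPg_def using P_step[OF Suc.prems(1) un] by simp
  also have "\<dots> = Sm n b n" using Suc un by simp
  finally show ?case .
qed

lemma fold_block: "1 \<le> n \<Longrightarrow> b < n \<Longrightarrow> fold (mat_mult (2^Suc n)) (blockG n b) (Sp n b) = Sp n (Suc b)"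
  unfolding blockG_def Hg_def using H_step[of n b] fold_phases[of b "Suc b" n] Sm_Sp[of n b] by simp

lemma fold_LG: "1 \<le> n \<Longrightarrow> b \<le> n \<Longrightarrow> fold (mat_mult (2^Suc n)) (concat (map (blockG n) [0..<b])) (mat_id (2^Suc n)) = Sp n b"
proof (induction b)
  case 0
  then show ?case by (simp add: Sp0)
next
  case (Suc b)
  then show ?case using fold_block[of n b] by simp
qed

lemma circ_G: "1 \<le> n \<Longrightarrow> circuit_matrix (Suc n) (rev (LG n)) = Sp n n"
  unfolding circuit_matrix_def foldr_conv_fold LG_def using fold_LG[of n n] by simp

definition rb :: "nat \<Rightarrow> nat \<Rightarrow> nat" where
  "rb n k = (\<Sum>m<n. bit m k * 2^(n-1-m))"

lemma zpow_E:
  assumes "l < n"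
  shows "zeta n ^ (2^l * rb n k) = zeta n ^ (Eexp n l n k)"
proof -
  have z: "\<forall>m\<in>{..<n} - {l..<n}. zeta n ^ (bit m k * 2^(l + (n-1-m))) = 1"
  proof
    fix m assume "m \<in> {..<n} - {l..<n}"
    then have "m < l" by auto
    then have "l + (n-1-m) = (l-1-m) + n" using assms by simp
    then have e: "bit m k * 2^(l + (n-1-m)) = (bit m k * 2^(l-1-m)) * 2^n" by (simp add: power_add)
    show "zeta n ^ (bit m k * 2^(l + (n-1-m))) = 1" unfolding e by (rule zeta_mult_N)
  qed
  have "2^l * rb n k = (\<Sum>m<n. bit m k * 2^(l + (n-1-m)))"
    unfolding rb_def sum_distrib_left power_add by (simp add: ac_simps)
  then have "zeta n ^ (2^l * rb n k) = (\<Prod>m<n. zeta n ^ (bit m k * 2^(l + (n-1-m))))"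
    by (simp add: power_sum)
  also have "\<dots> = (\<Prod>m\<in>{l..<n}. zeta n ^ (bit m k * 2^(l + (n-1-m))))"
    using z by (intro prod.mono_neutral_right) auto
  also have "\<dots> = (\<Prod>m\<in>{l..<n}. zeta n ^ (bit m k * 2^(n - 1 - m + l)))"
    by (rule prod.cong) (auto simp: ac_simps)
  also have "\<dots> = zeta n ^ (Eexp n l n k)" unfolding Eexp_def by (simp add: power_sum)
  finally show ?thesis .
qed

lemma Sp_final:
  assumes "1 \<le> n" "i < 2^n" "k < 2^n"
  shows "Sp n n i k = zeta n ^ (i * rb n k) * sq^n"
proof -
  have c: "(\<forall>l. n \<le> l \<and> l < Suc n \<longrightarrow> bit l i = bit l k)"
    using bit_ge[OF assms(2)] bit_ge[OF assms(3)] by auto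
  have "(\<Prod>l<n. zeta n ^ (bit l i * Eexp n l n k)) = (\<Prod>l<n. zeta n ^ (bit l i * 2^l * rb n k))"
  proof (rule prod.cong[OF refl])
    fix l assume "l \<in> {..<n}"
    then have l: "l < n" by simp
    have "zeta n ^ (bit l i * Eexp n l n k) = (zeta n ^ Eexp n l n k) ^ bit l i"
      by (metis mult.commute power_mult)
    also have "\<dots> = (zeta n ^ (2^l * rb n k)) ^ bit l i" using zpow_E[OF l] by simp
    also have "\<dots> = zeta n ^ (bit l i * 2^l * rb n k)"
      by (metis mult.commute mult.assoc power_mult)
    finally show "zeta n ^ (bit l i * Eexp n l n k) = zeta n ^ (bit l i * 2^l * rb n k)" .
  qed
  also have "\<dots> = zeta n ^ (\<Sum>l<n. bit l i * 2^l * rb n k)" by (simp add: power_sum)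
  also have "(\<Sum>l<n. bit l i * 2^l * rb n k) = i * rb n k"
    using bin_expand'[OF assms(2)] by (simp add: sum_distrib_right[symmetric])
  finally show ?thesis using assms c by (simp add: Sp_def)
qed


definition omega :: "nat \<Rightarrow> complex" where "omega n = cnj (zeta n)"
definition Dz :: "complex \<Rightarrow> cmat" where "Dz z = (\<lambda>k k'. if k = k' then (if k = 1 then z else 1) else 0)"

fun Wm :: "cmat list \<Rightarrow> complex \<Rightarrow> cmat" where
  "Wm [] z = mat_id 2"
| "Wm [R] z = R"
| "Wm (R # S # Rs) z = mat_mult 2 R (mat_mult 2 (Dz z) (Wm (S # Rs) z))"

definition cDg :: "nat \<Rightarrow> nat \<Rightarrow> cmat" where
  "cDg n b = two_qubit_gate (Suc n) n b (CP (omega n ^ (2^(n-1-b))))"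

definition og :: "nat \<Rightarrow> cmat \<Rightarrow> cmat" where
  "og n R = one_qubit_gate (Suc n) n R"

fun gsV :: "nat \<Rightarrow> cmat list \<Rightarrow> cmat list" where
  "gsV n [] = []"
| "gsV n [R] = [og n R]"
| "gsV n (R # S # Rs) = og n R # map (cDg n) [0..<n] @ gsV n (S # Rs)"

definition Vmat :: "nat \<Rightarrow> cmat list \<Rightarrow> cmat" where
  "Vmat n Rs = (\<lambda>i j. if i < 2^Suc n \<and> j < 2^Suc n \<and> i mod 2^n = j mod 2^n
     then Wm Rs (omega n ^ rb n (i mod 2^n)) (bit n i) (bit n j) else 0)"

lemma foldr_cD:
  assumes "rbd (2^Suc n) M" "\<forall>b\<in>set bs. b < n"
  shows "foldr (mat_mult (2^Suc n)) (map (cDg n) bs) M i j =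
    (if i < 2^Suc n then (\<Prod>b\<leftarrow>bs. (omega n ^ (2^(n-1-b)))^(bit n i * bit b i)) * M i j else 0)"
  using assms(2)
proof (induction bs)
  case Nil
  then show ?case using assms(1) by (simp add: rbd_def)
next
  case (Cons b bs)
  show ?case
  proof (cases "i < 2^Suc n")
    case True
    have "foldr (mat_mult (2^Suc n)) (map (cDg n) (b # bs)) M i j =
      mat_mult (2^Suc n) (cDg n b) (foldr (mat_mult (2^Suc n)) (map (cDg n) bs) M) i j" by simp
    also have "\<dots> = CP (omega n ^ (2^(n-1-b))) (2*bit n i + bit b i) (2*bit n i + bit b i) *
         foldr (mat_mult (2^Suc n)) (map (cDg n) bs) M i j"
      unfolding cDg_def by (rule two_gate_diag) (use Cons.prems True in \<open>auto simp: CP_def\<close>)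
    finally show ?thesis using Cons True by (simp add: CP_val)
  next
    case False
    then show ?thesis using rbd_two[of "Suc n" n b] by (simp add: cDg_def rbd_mult[unfolded rbd_def] rbd_def)
  qed
qed

lemma rb_mod: "rb n (i mod 2^n) = (\<Sum>b<n. bit b i * 2^(n-1-b))"
  unfolding rb_def by (rule sum.cong) (auto simp: bit_mod)

lemma cD_prod:
  "(\<Prod>b\<leftarrow>[0..<n]. (omega n ^ (2^(n-1-b)))^(bit n i * bit b i)) = (omega n ^ rb n (i mod 2^n)) ^ bit n i"
proof -
  have "(\<Prod>b\<leftarrow>[0..<n]. (omega n ^ (2^(n-1-b)))^(bit n i * bit b i)) =
      (\<Prod>b<n. (omega n ^ (2^(n-1-b)))^(bit n i * bit b i))"
    by (subst prod.distinct_set_conv_list[symmetric]) (simp_all add: atLeast0LessThan)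
  also have "\<dots> = (\<Prod>b<n. (omega n ^ (bit b i * 2^(n-1-b)))^(bit n i))"
    by (rule prod.cong) (auto simp flip: power_mult simp: ac_simps)
  also have "\<dots> = (omega n ^ rb n (i mod 2^n)) ^ bit n i"
    unfolding rb_mod power_sum prod_power_distrib by simp
  finally show ?thesis .
qed

lemma setb_top:
  assumes "i < 2^Suc n" "x < 2"
  shows "setb n x i mod 2^n = i mod 2^n" "bit n (setb n x i) = x" "setb n x i < 2^Suc n"
proof -
  have "i div 2^Suc n = 0" using assms by simp
  then have "setb n x i = i mod 2^n + x * 2^n" unfolding setb_def by simp
  then show "setb n x i mod 2^n = i mod 2^n" by simp
  show "bit n (setb n x i) = x" using assms by (simp add: bit_setb)
  show "setb n x i < 2^Suc n" using setb_lt[OF assms(1) _ assms(2)] by simp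
qed

lemma circuit_V: "Rs \<noteq> [] \<Longrightarrow> circuit_matrix (Suc n) (gsV n Rs) = Vmat n Rs"
proof (induction n Rs rule: gsV.induct)
  case (1 n)
  then show ?case by simp
next
  case (2 n R)
  show ?case
  proof (intro ext)
    fix i j
    have "circuit_matrix (Suc n) (gsV n [R]) = og n R"
      unfolding og_def gsV.simps by (rule circuit_single[OF cbd_one])
    moreover have "(\<forall>b<Suc n. b \<noteq> n \<longrightarrow> bit b i = bit b j) \<longleftrightarrow> i mod 2^n = j mod 2^n"
    proof
      assume h: "\<forall>b<Suc n. b \<noteq> n \<longrightarrow> bit b i = bit b j"
      show "i mod 2^n = j mod 2^n"
        by (rule bits_eq[of _ n]) (use h in \<open>auto simp: bit_mod\<close>)
    next
      assume "i mod 2^n = j mod 2^n"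
      then show "\<forall>b<Suc n. b \<noteq> n \<longrightarrow> bit b i = bit b j" by (metis bit_mod less_SucE)
    qed
    ultimately show "circuit_matrix (Suc n) (gsV n [R]) i j = Vmat n [R] i j"
      by (simp add: og_def one_qubit_gate_def Vmat_def)
  qed
next
  case (3 n R S Rs)
  have IH: "circuit_matrix (Suc n) (gsV n (S # Rs)) = Vmat n (S # Rs)" using 3 by simp
  have rV: "rbd (2^Suc n) (Vmat n (S # Rs))" by (simp add: rbd_def Vmat_def)
  show ?case
  proof (intro ext)
    fix i j
    have c: "circuit_matrix (Suc n) (gsV n (R # S # Rs)) =
      mat_mult (2^Suc n) (og n R) (foldr (mat_mult (2^Suc n)) (map (cDg n) [0..<n]) (Vmat n (S # Rs)))"
      using IH by (simp add: circuit_matrix_def)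
    show "circuit_matrix (Suc n) (gsV n (R # S # Rs)) i j = Vmat n (R # S # Rs) i j"
    proof (cases "i < 2^Suc n")
      case False
      then show ?thesis unfolding c using rbd_one[of "Suc n" n R]
        by (simp add: og_def rbd_mult[unfolded rbd_def] rbd_def Vmat_def)
    next
      case True
      define z where "z = omega n ^ rb n (i mod 2^n)"
      have "mat_mult (2^Suc n) (og n R) (foldr (mat_mult (2^Suc n)) (map (cDg n) [0..<n]) (Vmat n (S # Rs))) i j
         = (\<Sum>x<2. R (bit n i) x * foldr (mat_mult (2^Suc n)) (map (cDg n) [0..<n]) (Vmat n (S # Rs)) (setb n x i) j)"
        unfolding og_def by (rule one_gate_mult) (use True in auto)
      also have "\<dots> = (\<Sum>x<2. R (bit n i) x * (z^x * Vmat n (S # Rs) (setb n x i) j))"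
      proof (rule sum.cong[OF refl])
        fix x assume "x \<in> {..<2::nat}"
        then have x: "x < 2" by simp
        show "R (bit n i) x * foldr (mat_mult (2^Suc n)) (map (cDg n) [0..<n]) (Vmat n (S # Rs)) (setb n x i) j
           = R (bit n i) x * (z^x * Vmat n (S # Rs) (setb n x i) j)"
          using foldr_cD[OF rV, of "[0..<n]" "setb n x i" j] cD_prod[of n "setb n x i"] setb_top[OF True x]
          unfolding z_def by simp
      qed
      also have "\<dots> = Vmat n (R # S # Rs) i j"
      proof (cases "j < 2^Suc n \<and> i mod 2^n = j mod 2^n")
        case True2: True
        have "(\<Sum>x<2. R (bit n i) x * (z^x * Vmat n (S # Rs) (setb n x i) j)) =
          (\<Sum>x<2. R (bit n i) x * (z^x * Wm (S # Rs) z x (bit n j)))"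
          by (rule sum.cong[OF refl]) (use True True2 setb_top[OF True] in \<open>auto simp: Vmat_def z_def\<close>)
        also have "\<dots> = Wm (R # S # Rs) z (bit n i) (bit n j)"
          by (simp add: mat_mult_def Dz_def numeral_2_eq_2)
        finally show ?thesis using True True2 by (simp add: Vmat_def z_def)
      next
        case False
        then show ?thesis using True setb_top[OF True] by (auto simp: Vmat_def)
      qed
      finally show ?thesis unfolding c .
    qed
  qed
qed

lemma length_gsV: "length (gsV n Rs) = length Rs + (length Rs - 1) * n"
  by (induction n Rs rule: gsV.induct) auto


lemma digits_bit:
  assumes "\<forall>m<n. dg m < 2"
  shows "(\<Sum>m<n. dg m * 2^m) < 2^n \<and> (\<forall>b<n. bit b (\<Sum>m<n. dg m * 2^m) = dg b)"
  using assms
proof (induction n)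
  case 0
  then show ?case by simp
next
  case (Suc n)
  define x where "x = (\<Sum>m<n. dg m * 2^m)"
  have IH: "x < 2^n" "\<forall>b<n. bit b x = dg b" using Suc unfolding x_def by auto
  have d: "dg n < 2" using Suc.prems by simp
  have s: "(\<Sum>m<Suc n. dg m * 2^m) = x + dg n * 2^n" unfolding x_def by simp
  have h: "dg n * 2^n \<le> 2^n" using d less_2_cases_iff[of "dg n"] by auto
  have lt: "x + dg n * 2^n < 2^Suc n" using IH(1) h unfolding power_Suc by linarith
  have bits: "\<forall>b<Suc n. bit b (x + dg n * 2^n) = dg b"
  proof (intro allI impI)
    fix b assume b: "b < Suc n"
    show "bit b (x + dg n * 2^n) = dg b"
    proof (cases "b < n")
      case True
      have "(x + dg n * 2^n) mod 2^n = x" using IH by simp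
      then show ?thesis using bit_mod[OF True, of "x + dg n * 2^n"] IH True by simp
    next
      case False
      then have bn: "b = n" using b by simp
      have "(x + dg n * 2^n) div 2^n = dg n" using IH by simp
      then show ?thesis using bn d by (simp add: bit_def)
    qed
  qed
  show ?case using s lt bits by simp
qed

lemma rb_alt: "rb n k = (\<Sum>m<n. bit (n - Suc m) k * 2^m)"
proof -
  have "rb n k = (\<Sum>m<n. bit (n - Suc m) k * 2^(n - 1 - (n - Suc m)))"
    unfolding rb_def by (rule sum.nat_diff_reindex[symmetric])
  also have "\<dots> = (\<Sum>m<n. bit (n - Suc m) k * 2^m)"
    by (rule sum.cong) auto
  finally show ?thesis .
qed

lemma rb_props: "rb n k < 2^n \<and> (\<forall>b<n. bit b (rb n k) = bit (n - Suc b) k)"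
  unfolding rb_alt by (rule digits_bit) simp

lemma rb_rb: "k < 2^n \<Longrightarrow> rb n (rb n k) = k"
  by (rule bits_eq[of _ n]) (use rb_props[of n] in \<open>auto simp: Suc_diff_Suc\<close>)

lemma rb_bij: "bij_betw (rb n) {..<2^n} {..<2^n}"
  by (rule bij_betw_byWitness[where f'="rb n"]) (auto simp: rb_rb rb_props)

section \<open>roots of unity\<close>

lemma omega_cis: "omega n = cis (2 * pi / 2^n)"
  by (simp add: omega_def zeta_def cis_cnj)

lemma omega_pow: "omega n ^ a = cis (2 * pi * real a / 2^n)"
  unfolding omega_cis DeMoivre by (simp add: ac_simps)

lemma cmod_omega[simp]: "cmod (omega n) = 1" by (simp add: omega_cis)

lemma cnj_omega_mult: "cnj (omega n) * omega n = 1"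
  unfolding omega_cis cis_cnj cis_mult by simp

lemma omega_N: "omega n ^ (2^n) = 1"
  by (simp add: omega_def zeta_N flip: complex_cnj_power)

lemma omega_mod: "omega n ^ a = omega n ^ (a mod 2^n)"
proof -
  have "omega n ^ a = omega n ^ (a mod 2^n + 2^n * (a div 2^n))" by simp
  also have "\<dots> = omega n ^ (a mod 2^n) * (omega n ^ 2^n) ^ (a div 2^n)" by (metis power_add power_mult)
  finally show ?thesis by (simp add: omega_N)
qed

lemma omega_one: assumes "t < 2^n" "omega n ^ t = 1" shows "t = 0"
proof -
  have "cos (2 * pi * real t / 2^n) = 1" using assms(2) unfolding omega_pow
    by (metis cis.sel(1) one_complex.sel(1))
  then obtain x :: int where x: "2 * pi * real t / 2^n = real_of_int x * 2 * pi"
    using cos_one_2pi_int by blast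
  then have "real t / 2^n = real_of_int x" by (simp add: field_simps)
  moreover have "0 \<le> real t / 2^n" "real t / 2^n < 1" using assms(1) by (auto simp: field_simps)
  ultimately have "x = 0" by linarith
  then show ?thesis using x by simp
qed

lemma omega_inj: assumes "a < 2^n" "b < 2^n" "omega n ^ a = omega n ^ b" shows "a = b"
proof -
  have nz: "omega n \<noteq> 0" by (metis cmod_omega norm_zero zero_neq_one)
  {
    fix a b :: nat assume ab: "a \<le> b" "b < 2^n" "omega n ^ a = omega n ^ b"
    have "omega n ^ b = omega n ^ a * omega n ^ (b - a)" using ab(1) by (simp flip: power_add)
    then have "omega n ^ a * omega n ^ (b - a) = omega n ^ a * 1" using ab(3) by simp
    then have "omega n ^ (b - a) = 1" using nz by simp
    then have "b - a = 0" using omega_one[of "b-a" n] ab by simp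
    then have "a = b" using ab by simp
  }
  then show ?thesis using assms by (metis nat_le_linear)
qed

lemma geo:
  assumes "i < 2^n"
  shows "(\<Sum>k<2^n. cnj (omega n) ^ (i * k) * omega n ^ (t * k)) = (if t mod 2^n = i then 2^n else 0)"
proof -
  define w where "w = cnj (omega n) ^ i * omega n ^ t"
  have e: "(\<Sum>k<2^n. cnj (omega n) ^ (i * k) * omega n ^ (t * k)) = (\<Sum>k<2^n. w ^ k)"
    unfolding w_def by (simp add: power_mult power_mult_distrib)
  have wN: "w ^ 2^n = 1" unfolding w_def power_mult_distrib
    by (simp add: power_mult[symmetric] mult.commute[of i] mult.commute[of t] power_mult omega_N
        flip: complex_cnj_power)
  have w1: "w = 1 \<longleftrightarrow> t mod 2^n = i"
  proof
    assume "w = 1"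
    have "omega n ^ t = omega n ^ t * (cnj (omega n) * omega n) ^ i" by (simp add: cnj_omega_mult)
    also have "\<dots> = w * omega n ^ i" unfolding w_def by (simp add: power_mult_distrib ac_simps)
    finally have "omega n ^ t = w * omega n ^ i" .
    then have "omega n ^ (t mod 2^n) = omega n ^ i" using \<open>w = 1\<close> omega_mod[of n t] by simp
    then show "t mod 2^n = i" using omega_inj[of "t mod 2^n" n i] assms by simp
  next
    assume "t mod 2^n = i"
    then have "omega n ^ t = omega n ^ i" using omega_mod[of n t] by simp
    then show "w = 1" unfolding w_def by (simp add: power_mult_distrib[symmetric] cnj_omega_mult)
  qed
  show ?thesis unfolding e sum_gp_strict using wN w1 by auto
qed

section \<open>shift powers\<close>

lemma P_pow: "1 \<le> N \<Longrightarrow> mat_pow N (cyc_shift N) m i j = (if i < N \<and> j < N \<and> i = (j + m) mod N then 1 else 0)"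
proof (induction m arbitrary: i j)
  case 0
  then show ?case by (auto simp: mat_id_def)
next
  case (Suc m)
  have "mat_pow N (cyc_shift N) (Suc m) i j = (\<Sum>k<N. cyc_shift N i k * (if k < N \<and> j < N \<and> k = (j + m) mod N then 1 else 0))"
    using Suc by (simp add: mat_mult_def)
  also have "\<dots> = (\<Sum>k<N. if k = (j + m) mod N then (if j < N then cyc_shift N i ((j+m) mod N) else 0) else 0)"
    by (rule sum.cong) auto
  also have "\<dots> = (if j < N then cyc_shift N i ((j+m) mod N) else 0)"
    using Suc.prems by simp
  also have "\<dots> = (if i < N \<and> j < N \<and> i = (j + Suc m) mod N then 1 else 0)"
    using Suc.prems by (auto simp: cyc_shift_def mod_Suc_eq)
  finally show ?case .
qed

section \<open>Assembly of the matrix\<close>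

lemmas rbd_one' = rbd_one[of "Suc n" for n, simplified]
lemmas cbd_one' = cbd_one[of "Suc n" for n, simplified]
lemmas rbd_two' = rbd_two[of "Suc n" for n, simplified]
lemmas cbd_two' = cbd_two[of "Suc n" for n, simplified]

lemma LG_gates: "g \<in> set (LG n) \<Longrightarrow> rbd (2^Suc n) g \<and> cbd (2^Suc n) g"
  by (auto simp: LG_def blockG_def Hg_def CPg_def rbd_one' cbd_one' rbd_two' cbd_two')

lemma gsV_gates: "g \<in> set (gsV n Rs) \<Longrightarrow> rbd (2^Suc n) g"
  by (induction n Rs rule: gsV.induct) (auto simp: og_def cDg_def rbd_one' rbd_two')

lemma U_mat:
  assumes "1 \<le> n" "Rs \<noteq> []"
  shows "circuit_matrix (Suc n) (rev (LG n) @ gsV n Rs @ map adjm (LG n)) =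
     mat_mult (2^Suc n) (Sp n n) (mat_mult (2^Suc n) (Vmat n Rs) (adjm (Sp n n)))"
proof -
  have a1: "\<forall>g\<in>set (map adjm (LG n)). rbd (2^Suc n) g" using LG_gates by (auto intro: rbd_adjm)
  have a2: "\<forall>g\<in>set (gsV n Rs @ map adjm (LG n)). rbd (2^Suc n) g" using a1 gsV_gates by auto
  have adj: "circuit_matrix (Suc n) (map adjm (LG n)) = adjm (Sp n n)"
  proof -
    have "adjm (circuit_matrix (Suc n) (rev (LG n))) = circuit_matrix (Suc n) (rev (map adjm (rev (LG n))))"
      by (rule circuit_adj) (use LG_gates in auto)
    then show ?thesis using circ_G[OF assms(1)] by (simp add: rev_map)
  qed
  show ?thesis
    using circuit_append[OF a2, of "rev (LG n)"] circuit_append[OF a1, of "gsV n Rs"]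
      circ_G[OF assms(1)] circuit_V[OF assms(2)] adj by simp
qed

lemma bit_top: "2^n \<le> k \<Longrightarrow> k < 2^Suc n \<Longrightarrow> bit n k = 1"
proof -
  assume a: "2^n \<le> k" "k < 2^Suc n"
  have "k div 2^n = 1" using a by (simp add: div_nat_eqI)
  then show ?thesis by (simp add: bit_def)
qed

lemma Sp_zero: assumes "a < 2^n" "2^n \<le> k" shows "Sp n n a k = 0"
proof (cases "k < 2^Suc n")
  case True
  have "bit n a = 0" using bit_ge[OF assms(1)] by simp
  moreover have "bit n k = 1" using bit_top[OF assms(2) True] .
  ultimately show ?thesis unfolding Sp_def by auto
qed (simp add: Sp_def)

lemma sq_sq: "sq^n * cnj (sq^n) = 1 / 2^n"
proof -
  have "cnj sq = sq" by (simp add: sq_def)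
  moreover have "(1 / sqrt 2) * (1 / sqrt 2) = (1/2::real)" by (simp add: divide_simps)
  then have "sq * sq = 1/2" unfolding sq_def by (metis of_real_mult of_real_divide of_real_1 of_real_numeral)
  ultimately have "sq^n * cnj (sq^n) = (sq * sq)^n" by (simp add: power_mult_distrib)
  also have "\<dots> = (1/2)^n" by (simp only: \<open>sq * sq = 1/2\<close>)
  finally show ?thesis by (simp add: power_one_over)
qed

lemma U_entry:
  assumes n: "1 \<le> n" and i: "i < 2^n" and j: "j < 2^n"
  shows "mat_mult (2^Suc n) (Sp n n) (mat_mult (2^Suc n) (Vmat n Rs) (adjm (Sp n n))) i j =
     (\<Sum>k<2^n. zeta n ^ (i * rb n k) * Wm Rs (omega n ^ rb n k) 0 0 * cnj (zeta n ^ (j * rb n k)) / 2^n)"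
proof -
  have sub: "{..<(2::nat)^n} \<subseteq> {..<2^Suc n}" by auto
  have "mat_mult (2^Suc n) (Sp n n) (mat_mult (2^Suc n) (Vmat n Rs) (adjm (Sp n n))) i j =
     (\<Sum>k<2^Suc n. Sp n n i k * (\<Sum>l<2^Suc n. Vmat n Rs k l * cnj (Sp n n j l)))"
    by (simp add: mat_mult_def adjm_def)
  also have "\<dots> = (\<Sum>k<2^n. Sp n n i k * (\<Sum>l<2^Suc n. Vmat n Rs k l * cnj (Sp n n j l)))"
    by (rule sum.mono_neutral_right) (use Sp_zero[OF i] in auto)
  also have "\<dots> = (\<Sum>k<2^n. Sp n n i k * (Wm Rs (omega n ^ rb n k) 0 0 * cnj (Sp n n j k)))"
  proof (rule sum.cong[OF refl])
    fix k assume "k \<in> {..<(2::nat)^n}"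
    then have k: "k < 2^n" by simp
    have "(\<Sum>l<2^Suc n. Vmat n Rs k l * cnj (Sp n n j l)) = (\<Sum>l<2^n. Vmat n Rs k l * cnj (Sp n n j l))"
      by (rule sum.mono_neutral_right) (use Sp_zero[OF j] in auto)
    also have "\<dots> = (\<Sum>l<2^n. if l = k then Wm Rs (omega n ^ rb n k) 0 0 * cnj (Sp n n j k) else 0)"
      by (rule sum.cong[OF refl]) (use k bit_ge[OF k, of n] bit_ge[of _ n n] in \<open>auto simp: Vmat_def\<close>)
    also have "\<dots> = Wm Rs (omega n ^ rb n k) 0 0 * cnj (Sp n n j k)" using k by simp
    finally show "Sp n n i k * (\<Sum>l<2^Suc n. Vmat n Rs k l * cnj (Sp n n j l)) =
        Sp n n i k * (Wm Rs (omega n ^ rb n k) 0 0 * cnj (Sp n n j k))" by simp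
  qed
  also have "\<dots> = (\<Sum>k<2^n. zeta n ^ (i * rb n k) * Wm Rs (omega n ^ rb n k) 0 0 * cnj (zeta n ^ (j * rb n k)) / 2^n)"
  proof (rule sum.cong[OF refl])
    fix k assume "k \<in> {..<(2::nat)^n}"
    then have k: "k < 2^n" by simp
    show "Sp n n i k * (Wm Rs (omega n ^ rb n k) 0 0 * cnj (Sp n n j k)) =
      zeta n ^ (i * rb n k) * Wm Rs (omega n ^ rb n k) 0 0 * cnj (zeta n ^ (j * rb n k)) / 2^n"
    proof -
      have "Sp n n i k * (Wm Rs (omega n ^ rb n k) 0 0 * cnj (Sp n n j k)) =
        zeta n ^ (i * rb n k) * Wm Rs (omega n ^ rb n k) 0 0 * cnj (zeta n ^ (j * rb n k)) * (sq^n * cnj (sq^n))"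
        unfolding Sp_final[OF n i k] Sp_final[OF n j k] complex_cnj_mult by (simp only: ac_simps)
      then show ?thesis unfolding sq_sq by simp
    qed
  qed
  finally show ?thesis .
qed


lemma nsq: "complex_of_real ((cmod w)^2) = cnj w * w"
  using complex_norm_square[of w] by (simp add: mult.commute)

lemma circle_inv: "cmod z = 1 \<Longrightarrow> inverse (cnj z) = z"
  using nsq[of z] by (metis complex_cnj_cnj complex_cnj_inverse inverse_unique mult.commute of_real_1 power_one)

lemma circle_infinite: "infinite {z::complex. cmod z = 1}"
proof
  assume fin: "finite {z::complex. cmod z = 1}"
  define C where "C = card {z::complex. cmod z = 1}"
  have inj: "inj_on (\<lambda>k. omega C ^ k) {..<2^C}" using omega_inj by (auto simp: inj_on_def)
  have "(\<lambda>k. omega C ^ k) ` {..<2^C} \<subseteq> {z. cmod z = 1}" by (auto simp: norm_power)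
  then have "card ((\<lambda>k. omega C ^ k) ` {..<2^C}) \<le> C" using card_mono[OF fin] C_def by blast
  then have "2^C \<le> C" using card_image[OF inj] by simp
  then show False using less_exp[of C] by simp
qed

lemma poly_zero_circle: "(\<forall>z. cmod z = 1 \<longrightarrow> poly p z = 0) \<Longrightarrow> p = 0"
proof (rule ccontr)
  assume h: "\<forall>z. cmod z = 1 \<longrightarrow> poly p z = 0" and "p \<noteq> 0"
  then have "finite {z. poly p z = 0}" using poly_roots_finite by blast
  moreover have "{z::complex. cmod z = 1} \<subseteq> {z. poly p z = 0}" using h by auto
  ultimately show False using circle_infinite finite_subset by blast
qed

lemma poly_sum_m: fixes p :: "complex poly" assumes "degree p \<le> m" shows "poly p z = (\<Sum>k\<le>m. coeff p k * z^k)"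
proof -
  have "poly p z = (\<Sum>i\<le>degree p. coeff p i * z ^ i)" by (rule poly_altdef)
  also have "\<dots> = (\<Sum>k\<le>m. coeff p k * z^k)"
    by (rule sum.mono_neutral_left) (use assms in \<open>auto simp: coeff_eq_0\<close>)
  finally show ?thesis .
qed

definition rv :: "complex poly \<Rightarrow> nat \<Rightarrow> complex poly" where
  "rv p m = (\<Sum>k\<le>m. monom (cnj (coeff p k)) (m - k))"

lemma coeff_rv: "coeff (rv p m) t = (if t \<le> m then cnj (coeff p (m - t)) else 0)"
proof -
  have "coeff (rv p m) t = (\<Sum>k\<le>m. if m - k = t then cnj (coeff p k) else 0)"
    unfolding rv_def coeff_sum coeff_monom by simp
  also have "\<dots> = (\<Sum>k\<le>m. if k = m - t \<and> t \<le> m then cnj (coeff p k) else 0)"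
    by (rule sum.cong) auto
  also have "\<dots> = (if t \<le> m then cnj (coeff p (m - t)) else 0)"
    by (cases "t \<le> m") auto
  finally show ?thesis .
qed

lemma degree_rv: "degree (rv p m) \<le> m"
  by (rule degree_le) (simp add: coeff_rv)

lemma poly_rv:
  assumes "w \<noteq> 0" "degree p \<le> m"
  shows "poly (rv p m) w = w^m * cnj (poly p (inverse (cnj w)))"
proof -
  have "poly (rv p m) w = (\<Sum>k\<le>m. cnj (coeff p k) * w^(m - k))"
    unfolding rv_def by (simp add: poly_sum poly_monom)
  also have "\<dots> = (\<Sum>k\<le>m. w^m * (cnj (coeff p k) * inverse w ^ k))"
    by (rule sum.cong[OF refl]) (use assms(1) in \<open>simp add: power_diff field_simps\<close>)
  also have "\<dots> = w^m * cnj (poly p (inverse (cnj w)))"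
    unfolding poly_sum_m[OF assms(2)] by (simp add: sum_distrib_left)
  finally show ?thesis .
qed

lemma poly_rv_circle: "cmod z = 1 \<Longrightarrow> degree p \<le> m \<Longrightarrow> poly (rv p m) z = z^m * cnj (poly p z)"
  using poly_rv[of z p m] circle_inv[of z] by (metis norm_zero zero_neq_one)

lemma coeff_mult_top:
  assumes "degree p \<le> m" "degree r \<le> m"
  shows "coeff (p * r) (m + m) = coeff p m * coeff r m"
proof (cases "degree p = m \<and> degree r = m")
  case True
  then show ?thesis using coeff_mult_degree_sum[of p r] by simp
next
  case False
  then have "coeff p m = 0 \<or> coeff r m = 0" using assms by (auto intro: coeff_eq_0)
  moreover have "degree (p * r) < m + m" using False assms degree_mult_le[of p r] by linarith
  ultimately show ?thesis by (auto simp: coeff_eq_0)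
qed

lemma ortho:
  assumes "degree P \<le> m" "degree Q \<le> m" "1 \<le> m"
    "\<forall>z. cmod z = 1 \<longrightarrow> (cmod (poly P z))^2 + (cmod (poly Q z))^2 = 1"
  shows "coeff P m * cnj (coeff P 0) + coeff Q m * cnj (coeff Q 0) = 0"
proof -
  define H where "H = P * rv P m + Q * rv Q m - monom 1 m"
  have "\<forall>z. cmod z = 1 \<longrightarrow> poly H z = 0"
  proof (intro allI impI)
    fix z :: complex assume z: "cmod z = 1"
    have "poly H z = z^m * (poly P z * cnj (poly P z) + poly Q z * cnj (poly Q z) - 1)"
      unfolding H_def using z assms by (simp add: poly_rv_circle poly_monom algebra_simps)
    also have "poly P z * cnj (poly P z) + poly Q z * cnj (poly Q z) =
       complex_of_real ((cmod (poly P z))^2 + (cmod (poly Q z))^2)"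
      unfolding of_real_add nsq by (simp add: mult.commute)
    finally show "poly H z = 0" using assms(4) z by simp
  qed
  then have "H = 0" by (rule poly_zero_circle)
  then have "coeff H (m + m) = 0" by simp
  moreover have "coeff H (m + m) = coeff P m * cnj (coeff P 0) + coeff Q m * cnj (coeff Q 0)"
    unfolding H_def using assms degree_rv[of P m] degree_rv[of Q m]
    by (simp add: coeff_mult_top coeff_rv coeff_monom)
  ultimately show ?thesis by simp
qed

definition SU :: "complex \<Rightarrow> complex \<Rightarrow> cmat" where
  "SU x y = (\<lambda>i j. if i = 0 then (if j = 0 then x else - cnj y) else (if j = 0 then y else cnj x))"

lemma unitary_SU: "cnj x * x + cnj y * y = 1 \<Longrightarrow> unitary_mat 2 (SU x y)"
  unfolding unitary_mat_def SU_def by (auto simp: numeral_2_eq_2 less_Suc_eq algebra_simps)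

lemma normalize_pair:
  fixes u v :: complex
  assumes "(u, v) \<noteq> (0, 0)"
  shows "\<exists>s::real. s > 0 \<and> cnj (u / complex_of_real s) * (u / complex_of_real s) + cnj (v / complex_of_real s) * (v / complex_of_real s) = 1"
proof -
  define s where "s = sqrt ((cmod u)^2 + (cmod v)^2)"
  have pos: "(cmod u)^2 + (cmod v)^2 > 0" using assms by (auto simp: add_pos_nonneg add_nonneg_pos)
  then have s: "s > 0" unfolding s_def by simp
  have s2: "s^2 = (cmod u)^2 + (cmod v)^2" unfolding s_def using pos by simp
  have "cnj (u / complex_of_real s) * (u / complex_of_real s) + cnj (v / complex_of_real s) * (v / complex_of_real s) = (cnj u * u + cnj v * v) / complex_of_real (s^2)"
    by (simp add: add_divide_distrib power2_eq_square)
  also have "\<dots> = 1"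
  proof -
    have e: "cnj u * u + cnj v * v = complex_of_real (s^2)" unfolding s2 of_real_add nsq by simp
    show ?thesis unfolding e using s by simp
  qed
  finally show ?thesis using s by blast
qed

lemma choose_xy:
  assumes "a * cnj \<alpha> + b * cnj \<beta> = 0"
  shows "\<exists>x y. cnj x * x + cnj y * y = 1 \<and> cnj x * a + cnj y * b = 0 \<and> x * \<beta> - y * \<alpha> = 0"
proof -
  have "\<exists>u v. (u, v) \<noteq> (0, 0) \<and> cnj u * a + cnj v * b = 0 \<and> u * \<beta> - v * \<alpha> = 0"
  proof (cases "(a, b) = (0, 0)")
    case False
    have "cnj (a * cnj \<alpha> + b * cnj \<beta>) = 0" using assms by simp
    then have "cnj a * \<alpha> + cnj b * \<beta> = 0" by simp
    then show ?thesis using False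
      by (intro exI[of _ "cnj b"] exI[of _ "- cnj a"]) (auto simp: algebra_simps)
  next
    case True
    show ?thesis
    proof (cases "(\<alpha>, \<beta>) = (0, 0)")
      case True2: True
      then show ?thesis using True by (intro exI[of _ 1] exI[of _ 0]) auto
    next
      case False
      then show ?thesis using True by (intro exI[of _ \<alpha>] exI[of _ \<beta>]) (auto simp: algebra_simps)
    qed
  qed
  then obtain u v where uv: "(u, v) \<noteq> (0, 0)" "cnj u * a + cnj v * b = 0" "u * \<beta> - v * \<alpha> = 0" by blast
  obtain s :: real where s: "s > 0" "cnj (u / complex_of_real s) * (u / complex_of_real s) + cnj (v / complex_of_real s) * (v / complex_of_real s) = 1"
    using normalize_pair[OF uv(1)] by blast
  have "cnj (u / complex_of_real s) * a + cnj (v / complex_of_real s) * b = (cnj u * a + cnj v * b) / complex_of_real s"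
    by (simp add: add_divide_distrib)
  moreover have "(u / complex_of_real s) * \<beta> - (v / complex_of_real s) * \<alpha> = (u * \<beta> - v * \<alpha>) / complex_of_real s"
    by (simp add: diff_divide_distrib)
  ultimately show ?thesis using s uv by (intro exI[of _ "u / complex_of_real s"] exI[of _ "v / complex_of_real s"]) simp
qed

lemma deg_drop: "degree (p::complex poly) \<le> Suc d \<Longrightarrow> coeff p (Suc d) = 0 \<Longrightarrow> degree p \<le> d"
  by (rule degree_le) (metis Suc_lessI coeff_eq_0 le_less_trans)

lemma Wm_cons:
  "Wm (R # S # Rs) z 0 0 = R 0 0 * Wm (S # Rs) z 0 0 + R 0 1 * z * Wm (S # Rs) z 1 0"
  "Wm (R # S # Rs) z 1 0 = R 1 0 * Wm (S # Rs) z 0 0 + R 1 1 * z * Wm (S # Rs) z 1 0"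
  by (simp_all add: mat_mult_def Dz_def numeral_2_eq_2)

lemma gqsp:
  "degree P \<le> d \<Longrightarrow> degree Q \<le> d \<Longrightarrow>
   (\<forall>z. cmod z = 1 \<longrightarrow> (cmod (poly P z))^2 + (cmod (poly Q z))^2 = 1) \<Longrightarrow>
   \<exists>Rs. length Rs = Suc d \<and> (\<forall>R\<in>set Rs. unitary_mat 2 R) \<and>
     (\<forall>z. cmod z = 1 \<longrightarrow> Wm Rs z 0 0 = poly P z \<and> Wm Rs z 1 0 = poly Q z)"
proof (induction d arbitrary: P Q)
  case 0
  define \<alpha> where "\<alpha> = coeff P 0"
  define \<beta> where "\<beta> = coeff Q 0"
  have P: "P = [:\<alpha>:]" unfolding \<alpha>_def using 0 degree_0_id[of P] by simp
  have Q: "Q = [:\<beta>:]" unfolding \<beta>_def using 0 degree_0_id[of Q] by simp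
  have "(cmod \<alpha>)^2 + (cmod \<beta>)^2 = 1" using 0(3)[rule_format, of 1] P Q by simp
  then have "complex_of_real ((cmod \<alpha>)^2 + (cmod \<beta>)^2) = 1" by simp
  then have n: "cnj \<alpha> * \<alpha> + cnj \<beta> * \<beta> = 1" unfolding of_real_add nsq .
  have u: "unitary_mat 2 (SU \<alpha> \<beta>)" by (rule unitary_SU[OF n])
  show ?case
  proof (intro exI[of _ "[SU \<alpha> \<beta>]"] conjI)
    show "\<forall>R\<in>set [SU \<alpha> \<beta>]. unitary_mat 2 R" using u by simp
  qed (simp_all add: P Q SU_def)
next
  case (Suc d)
  define a where "a = coeff P (Suc d)"
  define b where "b = coeff Q (Suc d)"
  define \<alpha> where "\<alpha> = coeff P 0"
  define \<beta> where "\<beta> = coeff Q 0"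
  have o: "a * cnj \<alpha> + b * cnj \<beta> = 0"
    unfolding a_def b_def \<alpha>_def \<beta>_def by (rule ortho) (use Suc.prems in auto)
  obtain x y where xy: "cnj x * x + cnj y * y = 1" "cnj x * a + cnj y * b = 0" "x * \<beta> - y * \<alpha> = 0"
    using choose_xy[OF o] by blast
  define P1 where "P1 = smult (cnj x) P + smult (cnj y) Q"
  define Q2 where "Q2 = smult (- y) P + smult x Q"
  have dP1: "degree P1 \<le> d"
  proof (rule deg_drop)
    show "degree P1 \<le> Suc d" unfolding P1_def using Suc.prems
      by (meson degree_add_le degree_smult_le order_trans)
    show "coeff P1 (Suc d) = 0" unfolding P1_def using xy(2) a_def b_def by simp
  qed
  obtain c0 Q1 where Q2c: "Q2 = pCons c0 Q1" by (cases Q2) auto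
  have "c0 = coeff Q2 0" using Q2c by simp
  also have "\<dots> = 0" unfolding Q2_def using xy(3) \<alpha>_def \<beta>_def by (simp add: algebra_simps)
  finally have Q2e: "Q2 = pCons 0 Q1" using Q2c by simp
  have dQ2: "degree Q2 \<le> Suc d" unfolding Q2_def using Suc.prems
    by (meson degree_add_le degree_smult_le order_trans)
  have dQ1: "degree Q1 \<le> d" using dQ2 unfolding Q2e by (cases "Q1 = 0") auto
  have circ: "\<forall>z. cmod z = 1 \<longrightarrow> (cmod (poly P1 z))^2 + (cmod (poly Q1 z))^2 = 1"
  proof (intro allI impI)
    fix z :: complex assume z: "cmod z = 1"
    have q: "poly Q2 z = z * poly Q1 z" unfolding Q2e by simp
    then have cq: "cmod (poly Q1 z) = cmod (poly Q2 z)" using z by (simp add: norm_mult)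
    define p where "p = poly P z"
    define r where "r = poly Q z"
    have "complex_of_real ((cmod (poly P1 z))^2 + (cmod (poly Q2 z))^2) =
       cnj (cnj x * p + cnj y * r) * (cnj x * p + cnj y * r) + cnj (- y * p + x * r) * (- y * p + x * r)"
      unfolding of_real_add nsq P1_def Q2_def p_def r_def by simp
    also have "\<dots> = (cnj x * x + cnj y * y) * (cnj p * p + cnj r * r)" by (simp add: algebra_simps)
    also have "\<dots> = complex_of_real ((cmod (poly P z))^2 + (cmod (poly Q z))^2)"
      unfolding xy(1) of_real_add nsq p_def r_def by simp
    also have "\<dots> = 1" using Suc.prems(3) z by simp
    finally have "(cmod (poly P1 z))^2 + (cmod (poly Q2 z))^2 = 1" by (simp only: of_real_eq_1_iff)
    then show "(cmod (poly P1 z))^2 + (cmod (poly Q1 z))^2 = 1" using cq by simp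
  qed
  obtain Rs where Rs: "length Rs = Suc d" "\<forall>R\<in>set Rs. unitary_mat 2 R"
    "\<forall>z. cmod z = 1 \<longrightarrow> Wm Rs z 0 0 = poly P1 z \<and> Wm Rs z 1 0 = poly Q1 z"
    using Suc.IH[OF dP1 dQ1 circ] by blast
  obtain S Rs' where RsS: "Rs = S # Rs'" using Rs(1) by (cases Rs) auto
  show ?case
  proof (intro exI[of _ "SU x y # Rs"] conjI allI impI)
    show "length (SU x y # Rs) = Suc (Suc d)" using Rs by simp
    show "\<forall>R\<in>set (SU x y # Rs). unitary_mat 2 R" using Rs(2) unitary_SU[OF xy(1)] by simp
  next
    fix z :: complex assume z: "cmod z = 1"
    have w: "Wm Rs z 0 0 = poly P1 z" "z * Wm Rs z 1 0 = poly Q2 z" using Rs(3) z Q2e by auto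
    have "Wm (SU x y # Rs) z 0 0 = x * poly P1 z - cnj y * poly Q2 z"
      unfolding RsS Wm_cons using w unfolding RsS by (simp add: SU_def algebra_simps)
    also have "\<dots> = (cnj x * x + cnj y * y) * poly P z"
      unfolding P1_def Q2_def by (simp add: algebra_simps)
    finally show "Wm (SU x y # Rs) z 0 0 = poly P z" using xy(1) by simp
    have "Wm (SU x y # Rs) z 1 0 = y * poly P1 z + cnj x * poly Q2 z"
      unfolding RsS Wm_cons using w unfolding RsS by (simp add: SU_def algebra_simps)
    also have "\<dots> = (cnj x * x + cnj y * y) * poly Q z"
      unfolding P1_def Q2_def by (simp add: algebra_simps)
    finally show "Wm (SU x y # Rs) z 1 0 = poly Q z" using xy(1) by simp
  qed
qed


definition nn :: "complex \<Rightarrow> bool" where "nn w \<longleftrightarrow> Im w = 0 \<and> 0 \<le> Re w"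

lemma closed_nn: "closed {w::complex. nn w}"
proof -
  have "{w::complex. nn w} = {w. Im w = 0} \<inter> {w. 0 \<le> Re w}" by (auto simp: nn_def)
  moreover have "closed {w::complex. Im w = 0}"
    by (intro closed_Collect_eq continuous_on_Im continuous_on_id continuous_on_const)
  moreover have "closed {w::complex. 0 \<le> Re w}"
    by (intro closed_Collect_le continuous_on_Re continuous_on_id continuous_on_const)
  ultimately show ?thesis by auto
qed

lemma nn_div: "nn w \<Longrightarrow> r > 0 \<Longrightarrow> nn (w / complex_of_real r)"
  by (simp add: nn_def Re_divide_of_real Im_divide_of_real)

lemma cis_Complex: "cis t = Complex (cos t) (sin t)" by (simp add: complex_eq_iff)

lemma cis_tendsto: "((\<lambda>t. cis t) \<longlongrightarrow> 1) (at (0::real) within S)"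
proof -
  have "((\<lambda>t. Complex (cos t) (sin t)) \<longlongrightarrow> Complex (cos 0) (sin 0)) (at (0::real) within S)"
    by (intro tendsto_Complex tendsto_intros)
  moreover have "Complex (cos 0) (sin 0) = 1" by (simp add: complex_eq_iff)
  ultimately show ?thesis unfolding cis_Complex by simp
qed

lemma cis_deriv0: "((\<lambda>t. (cis t - 1) / complex_of_real t) \<longlongrightarrow> \<i>) (at (0::real))"
proof -
  have s: "((\<lambda>y. sin y / y) \<longlongrightarrow> 1) (at (0::real))"
    using DERIV_sin[of 0] unfolding has_field_derivative_iff by simp
  have c: "((\<lambda>y. (cos y - 1) / y) \<longlongrightarrow> 0) (at (0::real))"
    using DERIV_cos[of 0] unfolding has_field_derivative_iff by simp
  have e: "(\<lambda>t. (cis t - 1) / complex_of_real t) = (\<lambda>t. Complex ((cos t - 1) / t) (sin t / t))"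
    by (intro ext) (simp add: complex_eq_iff Re_divide_of_real Im_divide_of_real)
  have "((\<lambda>t. Complex ((cos t - 1) / t) (sin t / t)) \<longlongrightarrow> Complex 0 1) (at (0::real))"
    by (rule tendsto_Complex[OF c s])
  moreover have "Complex 0 1 = \<i>" by (simp add: complex_eq_iff)
  ultimately show ?thesis unfolding e by simp
qed

lemma poly_circ_tendsto:
  assumes "a \<noteq> 0"
  shows "((\<lambda>t. poly p (a * cis t) / (a * cis t)^m) \<longlongrightarrow> poly p a / a^m) (at (0::real) within S)"
proof -
  have l: "((\<lambda>t. a * cis t) \<longlongrightarrow> a) (at (0::real) within S)"
    using tendsto_mult[OF tendsto_const[of a] cis_tendsto[of S]] by simp
  have "((\<lambda>t. poly p (a * cis t)) \<longlongrightarrow> poly p a) (at (0::real) within S)"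
    by (rule isCont_tendsto_compose[OF poly_isCont l])
  moreover have "((\<lambda>t. (a * cis t)^m) \<longlongrightarrow> a^m) (at (0::real) within S)"
    by (rule tendsto_power[OF l])
  ultimately show ?thesis using assms by (intro tendsto_divide) auto
qed

lemma cis_ne1: "0 < t \<Longrightarrow> t < 1 \<Longrightarrow> cis t \<noteq> 1"
proof
  assume t: "0 < t" "t < 1" and "cis t = 1"
  then have "sin t = 0" by (metis cis.sel(2) one_complex.sel(2))
  moreover have "sin t > 0" using t pi_ge_two by (intro sin_gt_zero) auto
  ultimately show False by simp
qed

lemma nn_limit:
  assumes a: "cmod a = 1" and h: "\<forall>z. cmod z = 1 \<longrightarrow> z \<noteq> a \<longrightarrow> nn (poly p z / z^m)"
  shows "nn (poly p a / a^m)"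
proof -
  have a0: "a \<noteq> 0" using a by auto
  have ev: "eventually (\<lambda>t. poly p (a * cis t) / (a * cis t)^m \<in> {w. nn w}) (at_right (0::real))"
    unfolding eventually_at_right_field
  proof (intro exI[of _ 1] conjI allI impI)
    fix t :: real assume t: "0 < t" "t < 1"
    have "a * cis t \<noteq> a" using cis_ne1[OF t] a0 by simp
    moreover have "cmod (a * cis t) = 1" using a by (simp add: norm_mult)
    ultimately show "poly p (a * cis t) / (a * cis t)^m \<in> {w. nn w}" using h by simp
  qed simp
  show ?thesis
    using Lim_in_closed_set[OF closed_nn ev trivial_limit_at_right_real poly_circ_tendsto[OF a0]] by simp
qed

lemma double_root:
  assumes a: "cmod a = 1" and hh: "h = [:-a,1:] * h1"
    and nnh: "\<forall>z. cmod z = 1 \<longrightarrow> nn (poly h z / z^m)"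
  shows "poly h1 a = 0"
proof -
  have a0: "a \<noteq> 0" using a by auto
  define \<psi> where "\<psi> t = a * ((cis t - 1) / complex_of_real t) * (poly h1 (a * cis t) / (a * cis t)^m)" for t
  define L where "L = a * \<i> * (poly h1 a / a^m)"
  have lim: "(\<psi> \<longlongrightarrow> L) (at 0)"
    unfolding \<psi>_def L_def
    by (intro tendsto_mult tendsto_const cis_deriv0 poly_circ_tendsto[OF a0])
  have eq: "\<psi> t = (poly h (a * cis t) / (a * cis t)^m) / complex_of_real t" if "t \<noteq> 0" for t
    unfolding \<psi>_def hh using that by (simp add: algebra_simps)
  have circ: "cmod (a * cis t) = 1" for t using a by (simp add: norm_mult)
  have evr: "eventually (\<lambda>t. \<psi> t \<in> {w. nn w}) (at_right (0::real))"
    unfolding eventually_at_right_field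
  proof (intro exI[of _ 1] conjI allI impI)
    fix t :: real assume t: "0 < t" "t < 1"
    have w: "nn (poly h (a * cis t) / (a * cis t)^m)" using nnh circ[of t] by auto
    have ne: "t \<noteq> 0" using t by simp
    show "\<psi> t \<in> {w. nn w}" unfolding mem_Collect_eq eq[OF ne] by (rule nn_div[OF w]) (use t in simp)
  qed simp
  have evl: "eventually (\<lambda>t. - \<psi> t \<in> {w. nn w}) (at_left (0::real))"
    unfolding eventually_at_left_field
  proof (intro exI[of _ "-1"] conjI allI impI)
    fix t :: real assume t: "-1 < t" "t < 0"
    have "- \<psi> t = (poly h (a * cis t) / (a * cis t)^m) / complex_of_real (- t)"
      using eq[of t] t by simp
    moreover have w: "nn (poly h (a * cis t) / (a * cis t)^m)" using nnh circ[of t] by auto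
    ultimately show "- \<psi> t \<in> {w. nn w}" unfolding mem_Collect_eq using nn_div[OF w, of "-t"] t by simp
  qed simp
  have lr: "(\<psi> \<longlongrightarrow> L) (at_right 0)" and ll: "(\<psi> \<longlongrightarrow> L) (at_left 0)"
    using lim filterlim_at_split by auto
  have "L \<in> {w. nn w}" by (rule Lim_in_closed_set[OF closed_nn evr trivial_limit_at_right_real lr])
  moreover have "- L \<in> {w. nn w}"
    by (rule Lim_in_closed_set[OF closed_nn evl trivial_limit_at_left_real tendsto_minus[OF ll]])
  ultimately have "L = 0" by (auto simp: nn_def complex_eq_iff)
  then show ?thesis unfolding L_def using a0 by simp
qed

lemma cnj_circle: "cmod z = 1 \<Longrightarrow> cnj z = inverse z"
  using circle_inv[of z] by (metis inverse_inverse_eq)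

lemma sym_poly:
  assumes "degree h \<le> 2*m" "\<forall>z. cmod z = 1 \<longrightarrow> Im (poly h z / z^m) = 0"
  shows "h = rv h (2*m)"
proof -
  have "h - rv h (2*m) = 0"
  proof (rule poly_zero_circle, intro allI impI)
    fix z :: complex assume z: "cmod z = 1"
    have z0: "z \<noteq> 0" using z by auto
    define w where "w = poly h z / z^m"
    have "Im w = 0" using assms(2) z unfolding w_def by simp
    then have cw: "cnj w = w" by (simp add: complex_eq_iff)
    have hz: "poly h z = w * z^m" unfolding w_def using z0 by simp
    have "poly (rv h (2*m)) z = z^(2*m) * cnj (poly h z)" by (rule poly_rv_circle[OF z assms(1)])
    also have "\<dots> = z^(2*m) * (w * inverse z ^ m)" unfolding hz using cw cnj_circle[OF z] by simp
    also have "\<dots> = w * z^m"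
    proof -
      have "z^(2*m) = z^m * z^m" by (simp add: mult_2 power_add)
      then show ?thesis using z0 by (simp add: field_simps)
    qed
    finally show "poly (h - rv h (2*m)) z = 0" using hz by simp
  qed
  then show ?thesis by simp
qed

lemma kap1:
  assumes "cmod z = 1" "cmod a = 1"
  shows "(z - a) * (z - a) / z = (- a) * complex_of_real ((cmod (z - a))^2)"
proof -
  have z0: "z \<noteq> 0" and a0: "a \<noteq> 0" using assms by auto
  have ca: "cnj a = inverse a" by (rule cnj_circle[OF assms(2)])
  show ?thesis unfolding nsq complex_cnj_diff cnj_circle[OF assms(1)] ca using z0 a0
    by (simp add: field_simps)
qed

lemma kap2:
  assumes "cmod z = 1" "a \<noteq> 0"
  shows "(z - a) * (z - inverse (cnj a)) / z = (- 1 / cnj a) * complex_of_real ((cmod (z - a))^2)"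
proof -
  have z0: "z \<noteq> 0" using assms by auto
  have ca: "cnj a \<noteq> 0" using assms by simp
  show ?thesis unfolding nsq complex_cnj_diff cnj_circle[OF assms(1)] using z0 ca
    by (simp add: field_simps)
qed

lemma FR_step:
  assumes IH: "\<forall>h. degree h \<le> 2*m \<longrightarrow> (\<forall>z. cmod z = 1 \<longrightarrow> nn (poly h z / z^m)) \<longrightarrow>
      (\<exists>q. degree q \<le> m \<and> (\<forall>z. cmod z = 1 \<longrightarrow> complex_of_real ((cmod (poly q z))^2) = poly h z / z^m))"
    and h: "h = [:-a,1:] * ([:-b,1:] * h2)" and deg: "degree h2 \<le> 2*m"
    and kap: "\<And>z. cmod z = 1 \<Longrightarrow> (z - a) * (z - b) / z = \<kappa> * complex_of_real ((cmod (z - a))^2)"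
    and nnh: "\<forall>z. cmod z = 1 \<longrightarrow> nn (poly h z / z^Suc m)"
  shows "\<exists>q. degree q \<le> Suc m \<and> (\<forall>z. cmod z = 1 \<longrightarrow> complex_of_real ((cmod (poly q z))^2) = poly h z / z^Suc m)"
proof -
  define h3 where "h3 = smult \<kappa> h2"
  have key: "poly h z / z^Suc m = complex_of_real ((cmod (z - a))^2) * (poly h3 z / z^m)" if z: "cmod z = 1" for z
  proof -
    have z0: "z \<noteq> 0" using z by auto
    have "poly h z / z^Suc m = ((z - a) * (z - b) / z) * (poly h2 z / z^m)"
      unfolding h using z0 by (simp add: field_simps)
    also have "\<dots> = complex_of_real ((cmod (z - a))^2) * (poly h3 z / z^m)"
      unfolding kap[OF z] h3_def by simp
    finally show ?thesis .
  qed
  have nn3': "\<forall>z. cmod z = 1 \<longrightarrow> z \<noteq> a \<longrightarrow> nn (poly h3 z / z^m)"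
  proof (intro allI impI)
    fix z :: complex assume z: "cmod z = 1" and za: "z \<noteq> a"
    have pos: "(cmod (z - a))^2 > 0" using za by simp
    have "poly h3 z / z^m = (poly h z / z^Suc m) / complex_of_real ((cmod (z - a))^2)"
      using key[OF z] pos by (simp add: field_simps)
    then show "nn (poly h3 z / z^m)" using nn_div[of "poly h z / z^Suc m" "(cmod (z - a))^2"] nnh z pos by simp
  qed
  have nn3: "\<forall>z. cmod z = 1 \<longrightarrow> nn (poly h3 z / z^m)"
  proof (intro allI impI)
    fix z :: complex assume z: "cmod z = 1"
    show "nn (poly h3 z / z^m)"
    proof (cases "z = a")
      case True
      then show ?thesis using nn_limit[of a h3 m] nn3' z by simp
    qed (use nn3' z in auto)
  qed
  have dh3: "degree h3 \<le> 2*m" unfolding h3_def using deg degree_smult_le order_trans by blast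
  obtain q3 where q3: "degree q3 \<le> m" "\<forall>z. cmod z = 1 \<longrightarrow> complex_of_real ((cmod (poly q3 z))^2) = poly h3 z / z^m"
    using IH dh3 nn3 by blast
  show ?thesis
  proof (intro exI[of _ "[:-a,1:] * q3"] conjI allI impI)
    show "degree ([:-a,1:] * q3) \<le> Suc m"
      using degree_mult_le[of "[:-a,1:]" q3] q3(1) by simp
  next
    fix z :: complex assume z: "cmod z = 1"
    have "complex_of_real ((cmod (poly ([:-a,1:] * q3) z))^2) =
       complex_of_real ((cmod (z - a))^2) * complex_of_real ((cmod (poly q3 z))^2)"
    proof -
      have "poly ([:-a,1:] * q3) z = (z - a) * poly q3 z" by (simp add: algebra_simps)
      then show ?thesis by (simp only: norm_mult power_mult_distrib of_real_mult)
    qed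
    also have "\<dots> = poly h z / z^Suc m" using q3(2) z key[OF z] by simp
    finally show "complex_of_real ((cmod (poly ([:-a,1:] * q3) z))^2) = poly h z / z^Suc m" .
  qed
qed

lemma FR:
  "degree h \<le> 2*m \<Longrightarrow> (\<forall>z. cmod z = 1 \<longrightarrow> nn (poly h z / z^m)) \<Longrightarrow>
   \<exists>q. degree q \<le> m \<and> (\<forall>z. cmod z = 1 \<longrightarrow> complex_of_real ((cmod (poly q z))^2) = poly h z / z^m)"
proof (induction m arbitrary: h)
  case 0
  define c where "c = coeff h 0"
  have hc: "h = [:c:]" unfolding c_def using 0 degree_0_id[of h] by simp
  have "nn c" using 0(2)[rule_format, of 1] hc by simp
  then have c: "Im c = 0" "0 \<le> Re c" by (auto simp: nn_def)
  show ?case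
  proof (intro exI[of _ "[:complex_of_real (sqrt (Re c)):]"] conjI allI impI)
    fix z :: complex assume "cmod z = 1"
    show "complex_of_real ((cmod (poly [:complex_of_real (sqrt (Re c)):] z))^2) = poly h z / z^0"
      using c hc by (simp add: complex_eq_iff)
  qed simp
next
  case (Suc m)
  note IH = Suc.IH
  have deg: "degree h \<le> 2 * Suc m" and nnh: "\<forall>z. cmod z = 1 \<longrightarrow> nn (poly h z / z^Suc m)"
    using Suc.prems by auto
  have sym: "h = rv h (2 * Suc m)" by (rule sym_poly[OF deg]) (use nnh in \<open>auto simp: nn_def\<close>)
  have cs: "coeff h k = cnj (coeff h (2 * Suc m - k))" if "k \<le> 2 * Suc m" for k
    using arg_cong[OF sym, of "\<lambda>p. coeff p k"] that by (simp add: coeff_rv)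
  show ?case
  proof (cases "h = 0")
    case True
    then show ?thesis by (intro exI[of _ 0]) simp
  next
    case hne: False
    show ?thesis
    proof (cases "coeff h 0 = 0")
      case True
      obtain c0 h1 where hp: "h = pCons c0 h1" by (cases h) auto
      have c00: "c0 = 0" using True hp by simp
      have top: "coeff h (2 * Suc m) = 0" using cs[of "2 * Suc m"] True by simp
      have "degree h \<le> Suc (Suc (2 * m))" using deg by simp
      then have "degree h \<le> Suc (2 * m)" by (rule deg_drop) (use top in simp)
      then have dh1: "degree h1 \<le> 2 * m" unfolding hp c00 by (cases "h1 = 0") auto
      have nn1: "\<forall>z. cmod z = 1 \<longrightarrow> nn (poly h1 z / z^m)"
      proof (intro allI impI)
        fix z :: complex assume z: "cmod z = 1"
        then have z0: "z \<noteq> 0" by auto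
        have e: "poly h z / z^Suc m = poly h1 z / z^m" unfolding hp c00 using z0 by simp
        have "nn (poly h z / z^Suc m)" using nnh z by blast
        then show "nn (poly h1 z / z^m)" by (simp only: e)
      qed
      obtain q where q: "degree q \<le> m" "\<forall>z. cmod z = 1 \<longrightarrow> complex_of_real ((cmod (poly q z))^2) = poly h1 z / z^m"
        using IH[OF dh1 nn1] by blast
      show ?thesis
      proof (intro exI[of _ q] conjI allI impI)
        show "degree q \<le> Suc m" using q by simp
      next
        fix z :: complex assume z: "cmod z = 1"
        then have z0: "z \<noteq> 0" by auto
        have "poly h z / z^Suc m = poly h1 z / z^m" unfolding hp c00 using z0 by simp
        then show "complex_of_real ((cmod (poly q z))^2) = poly h z / z^Suc m" using q z by simp
      qed
    next
      case c0: False
      have top: "coeff h (2 * Suc m) \<noteq> 0" using cs[of "2 * Suc m"] c0 by simp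
      then have dh: "degree h = 2 * Suc m" using deg le_degree by (meson antisym)
      have "\<not> (\<exists>a l. a \<noteq> 0 \<and> l = 0 \<and> h = pCons a l)" using dh by auto
      then obtain a where ha: "poly h a = 0" using fundamental_theorem_of_algebra_alt by blast
      have a0: "a \<noteq> 0" using ha c0 by (auto simp: poly_0_coeff_0)
      obtain g where hg: "h = [:-a,1:] * g" using ha poly_eq_0_iff_dvd by (metis dvdE)
      have IH': "\<forall>h. degree h \<le> 2*m \<longrightarrow> (\<forall>z. cmod z = 1 \<longrightarrow> nn (poly h z / z^m)) \<longrightarrow>
         (\<exists>q. degree q \<le> m \<and> (\<forall>z. cmod z = 1 \<longrightarrow> complex_of_real ((cmod (poly q z))^2) = poly h z / z^m))"
        using IH by blast
      have deg2: "degree h2 \<le> 2 * m" if "h = [:-a,1:] * ([:-b,1:] * h2)" for b h2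
      proof -
        have "h2 \<noteq> 0" using that hne by auto
        then have "[:-b,1:] * h2 \<noteq> 0" by (simp del: mult_pCons_left)
        then have "degree h = Suc (Suc (degree h2))" unfolding that
          using degree_mult_eq[of "[:-b,1:]" h2] degree_mult_eq[of "[:-a,1:]" "[:-b,1:] * h2"] \<open>h2 \<noteq> 0\<close>
          by (simp del: mult_pCons_left)
        then show ?thesis using dh by simp
      qed
      show ?thesis
      proof (cases "cmod a = 1")
        case True
        have "poly g a = 0" by (rule double_root[OF True hg nnh])
        then obtain h2 where gh: "g = [:-a,1:] * h2" using poly_eq_0_iff_dvd by (metis dvdE)
        have hh: "h = [:-a,1:] * ([:-a,1:] * h2)" using hg gh by simp
        have k: "\<And>z. cmod z = 1 \<Longrightarrow> (z - a) * (z - a) / z = (- a) * complex_of_real ((cmod (z - a))^2)"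
          using kap1 True by blast
        show ?thesis by (rule FR_step[where \<kappa>="-a", OF IH' hh deg2[OF hh] k nnh])
      next
        case False
        define b where "b = inverse (cnj a)"
        have hb: "poly h b = 0"
        proof -
          have "poly h b = poly (rv h (2 * Suc m)) b" using sym by simp
          also have "\<dots> = b^(2 * Suc m) * cnj (poly h (inverse (cnj b)))"
            by (rule poly_rv) (use a0 deg in \<open>auto simp: b_def\<close>)
          also have "inverse (cnj b) = a" unfolding b_def by simp
          finally show ?thesis using ha by simp
        qed
        have ba: "b \<noteq> a"
        proof
          assume "b = a"
          then have "a = inverse (cnj a)" unfolding b_def by simp
          then have "cnj a * a = cnj a * inverse (cnj a)" by simp
          also have "\<dots> = 1" using a0 by simp
          finally have "cnj a * a = 1" .
          then have "complex_of_real ((cmod a)^2) = 1" by (simp only: nsq)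
          then have "(cmod a)^2 = 1" by (simp only: of_real_eq_1_iff)
          then show False using False norm_ge_zero[of a] by (simp add: power2_eq_1_iff)
        qed
        have "poly g b = 0" using hb hg ba by simp
        then obtain h2 where gh: "g = [:-b,1:] * h2" using poly_eq_0_iff_dvd by (metis dvdE)
        have hh: "h = [:-a,1:] * ([:-b,1:] * h2)" using hg gh by simp
        have k: "\<And>z. cmod z = 1 \<Longrightarrow> (z - a) * (z - b) / z = (- 1 / cnj a) * complex_of_real ((cmod (z - a))^2)"
          unfolding b_def using kap2 a0 by blast
        show ?thesis by (rule FR_step[where \<kappa>="- 1 / cnj a", OF IH' hh deg2[OF hh] k nnh])
      qed
    qed
  qed
qed

lemma qsp_exists:
  fixes K :: real
  assumes K: "K > 0" and bnd: "\<forall>z. cmod z = 1 \<longrightarrow> cmod (\<Sum>k\<le>d. c k * z^k) \<le> K"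
  shows "\<exists>Rs. length Rs = Suc d \<and> (\<forall>R\<in>set Rs. unitary_mat 2 R) \<and>
     (\<forall>z. cmod z = 1 \<longrightarrow> Wm Rs z 0 0 = (\<Sum>m\<le>d. c m * z^m) / K)"
proof -
  define P where "P = smult (1 / complex_of_real K) (\<Sum>k\<le>d. monom (c k) k)"
  have Pz: "poly P z = (\<Sum>k\<le>d. c k * z^k) / K" for z
    unfolding P_def by (simp add: poly_sum poly_monom)
  have dP: "degree P \<le> d" unfolding P_def
    by (rule order_trans[OF degree_smult_le]) (intro degree_sum_le, auto intro: order_trans[OF degree_monom_le])
  have Pb: "cmod (poly P z) \<le> 1" if "cmod z = 1" for z
  proof -
    have "cmod (poly P z) = cmod (\<Sum>k\<le>d. c k * z^k) / K" unfolding Pz using K by (simp add: norm_divide)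
    also have "\<dots> \<le> 1" using bnd that K by simp
    finally show ?thesis .
  qed
  define h where "h = monom 1 d - P * rv P d"
  have dh: "degree h \<le> 2 * d"
  proof -
    have "degree (P * rv P d) \<le> 2 * d" using degree_mult_le[of P "rv P d"] dP degree_rv[of P d] by simp
    moreover have "degree (monom (1::complex) d) \<le> 2 * d" using degree_monom_le[of "1::complex" d] by simp
    ultimately show ?thesis unfolding h_def using degree_diff_le by blast
  qed
  have hz: "poly h z / z^d = complex_of_real (1 - (cmod (poly P z))^2)" if z: "cmod z = 1" for z
  proof -
    have z0: "z \<noteq> 0" using z by auto
    have "poly h z = z^d - poly P z * (z^d * cnj (poly P z))"
      unfolding h_def using poly_rv_circle[OF z dP] by (simp add: poly_monom)
    then have "poly h z / z^d = 1 - cnj (poly P z) * poly P z" using z0 by (simp add: field_simps)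
    then show ?thesis by (simp only: of_real_diff of_real_1 nsq)
  qed
  have nnh: "\<forall>z. cmod z = 1 \<longrightarrow> nn (poly h z / z^d)"
  proof (intro allI impI)
    fix z :: complex assume z: "cmod z = 1"
    have "(cmod (poly P z))^2 \<le> 1" using Pb[OF z] by (simp add: power_le_one)
    then show "nn (poly h z / z^d)" unfolding hz[OF z] nn_def by simp
  qed
  obtain Q where Q: "degree Q \<le> d" "\<forall>z. cmod z = 1 \<longrightarrow> complex_of_real ((cmod (poly Q z))^2) = poly h z / z^d"
    using FR[OF dh nnh] by blast
  have circ: "\<forall>z. cmod z = 1 \<longrightarrow> (cmod (poly P z))^2 + (cmod (poly Q z))^2 = 1"
  proof (intro allI impI)
    fix z :: complex assume z: "cmod z = 1"
    have "complex_of_real ((cmod (poly Q z))^2) = complex_of_real (1 - (cmod (poly P z))^2)"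
      using Q(2) hz z by simp
    then have "(cmod (poly Q z))^2 = 1 - (cmod (poly P z))^2" by (simp only: of_real_eq_iff)
    then show "(cmod (poly P z))^2 + (cmod (poly Q z))^2 = 1" by simp
  qed
  obtain Rs where Rs: "length Rs = Suc d" "\<forall>R\<in>set Rs. unitary_mat 2 R"
    "\<forall>z. cmod z = 1 \<longrightarrow> Wm Rs z 0 0 = poly P z \<and> Wm Rs z 1 0 = poly Q z"
    using gqsp[OF dP Q(1) circ] by blast
  show ?thesis using Rs Pz by (intro exI[of _ Rs]) auto
qed


lemma zeta_cnj: "zeta n = cnj (omega n)" by (simp add: omega_def)

lemma final_sum:
  assumes n: "1 \<le> n" and i: "i < 2^n" and j: "j < 2^n"
    and W: "\<forall>z. cmod z = 1 \<longrightarrow> Wm Rs z 0 0 = (\<Sum>m\<le>d. c m * z^m) / K"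
  shows "(\<Sum>k<2^n. zeta n ^ (i * rb n k) * Wm Rs (omega n ^ rb n k) 0 0 * cnj (zeta n ^ (j * rb n k)) / 2^n)
     = circulant (2^n) d c i j / K"
proof -
  define f where "f r = cnj (omega n) ^ (i * r) * (\<Sum>m\<le>d. c m * (omega n ^ r)^m) / K * omega n ^ (j * r) / 2^n" for r
  have "(\<Sum>k<2^n. zeta n ^ (i * rb n k) * Wm Rs (omega n ^ rb n k) 0 0 * cnj (zeta n ^ (j * rb n k)) / 2^n)
      = (\<Sum>k<2^n. f (rb n k))"
    by (rule sum.cong[OF refl]) (simp add: f_def W zeta_cnj norm_power)
  also have "\<dots> = (\<Sum>k<2^n. f k)" by (rule sum.reindex_bij_betw[OF rb_bij])
  also have "\<dots> = (\<Sum>k<2^n. \<Sum>m\<le>d. c m / (K * 2^n) * (cnj (omega n) ^ (i * k) * omega n ^ ((m + j) * k)))"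
  proof (rule sum.cong[OF refl])
    fix k
    have e: "(omega n ^ k)^m * omega n ^ (j*k) = omega n ^ ((m+j)*k)" for m
      by (simp add: power_add power_mult[symmetric] algebra_simps)
    have "f k = (\<Sum>m\<le>d. c m * (omega n ^ k)^m) * (cnj (omega n) ^ (i * k) * omega n ^ (j * k) / (K * 2^n))"
      unfolding f_def by simp
    also have "\<dots> = (\<Sum>m\<le>d. c m * (omega n ^ k)^m * (cnj (omega n) ^ (i * k) * omega n ^ (j * k) / (K * 2^n)))"
      by (rule sum_distrib_right)
    also have "\<dots> = (\<Sum>m\<le>d. c m / (K * 2^n) * (cnj (omega n) ^ (i * k) * omega n ^ ((m + j) * k)))"
      by (rule sum.cong[OF refl]) (simp add: e[symmetric])
    finally show "f k = (\<Sum>m\<le>d. c m / (K * 2^n) * (cnj (omega n) ^ (i * k) * omega n ^ ((m + j) * k)))" .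
  qed
  also have "\<dots> = (\<Sum>m\<le>d. c m / (K * 2^n) * (\<Sum>k<2^n. cnj (omega n) ^ (i * k) * omega n ^ ((m + j) * k)))"
    by (simp add: sum_distrib_left sum.swap[of _ "{..<2^n}"])
  also have "\<dots> = (\<Sum>m\<le>d. c m / K * (if (m + j) mod 2^n = i then 1 else 0))"
    by (rule sum.cong[OF refl]) (simp add: geo[OF i])
  also have "\<dots> = circulant (2^n) d c i j / K"
    unfolding circulant_def sum_divide_distrib
    by (rule sum.cong[OF refl]) (use i j in \<open>auto simp: P_pow add.commute\<close>)
  finally show ?thesis .
qed

lemma K_props:
  assumes "\<exists>k\<le>d. c k \<noteq> 0"
  shows "circ_norm d c > 0 \<and> (\<forall>z. cmod z = 1 \<longrightarrow> cmod (\<Sum>k\<le>d. c k * z^k) \<le> circ_norm d c)"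
proof -
  let ?S = "{z::complex. cmod z = 1}"
  let ?f = "\<lambda>z. cmod (\<Sum>k\<le>d. c k * z^k)"
  have bdd: "bdd_above (?f ` ?S)"
  proof (rule bdd_aboveI2)
    fix z assume z: "z \<in> ?S"
    have "?f z \<le> (\<Sum>k\<le>d. cmod (c k * z^k))" by (rule norm_sum)
    also have "\<dots> = (\<Sum>k\<le>d. cmod (c k))" using z by (simp add: norm_mult norm_power)
    finally show "?f z \<le> (\<Sum>k\<le>d. cmod (c k))" .
  qed
  have ub: "\<forall>z. cmod z = 1 \<longrightarrow> ?f z \<le> circ_norm d c"
    unfolding circ_norm_def using cSUP_upper[OF _ bdd] by auto
  define p where "p = (\<Sum>k\<le>d. monom (c k) k)"
  have pz: "poly p z = (\<Sum>k\<le>d. c k * z^k)" for z unfolding p_def by (simp add: poly_sum poly_monom)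
  obtain k0 where k0: "k0 \<le> d" "c k0 \<noteq> 0" using assms by auto
  have "coeff p k0 = c k0" unfolding p_def using k0 by (simp add: coeff_sum)
  then have "p \<noteq> 0" using k0 by auto
  then have fin: "finite {z. poly p z = 0}" by (rule poly_roots_finite)
  have "\<not> ?S \<subseteq> {z. poly p z = 0}" using circle_infinite fin finite_subset by blast
  then obtain z where z: "cmod z = 1" "poly p z \<noteq> 0" by auto
  then have f0: "?f z > 0" using pz by simp
  moreover have "?f z \<le> circ_norm d c" using ub z by auto
  ultimately have "circ_norm d c > 0" by linarith
  then show ?thesis using ub by blast
qed

lemma sq_props: "cnj sq = sq" "sq * sq = 1/2"
proof -
  show "cnj sq = sq" by (simp add: sq_def)
  have "(1 / sqrt 2) * (1 / sqrt 2) = (1/2::real)" by (simp add: divide_simps)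
  then show "sq * sq = 1/2" unfolding sq_def by (metis of_real_mult of_real_divide of_real_1 of_real_numeral)
qed

lemma sq3: "sq * (sq * 2) = 1" by (simp add: mult.assoc[symmetric] sq_props)

lemma unitary_Hd: "unitary_mat 2 Hd"
  unfolding unitary_mat_def Hd_def
  by (auto simp: numeral_2_eq_2 less_Suc_eq sq_props algebra_simps sq3)

lemma elem1: "a < q \<Longrightarrow> unitary_mat 2 U \<Longrightarrow> elementary_gate q (one_qubit_gate q a U)"
  unfolding elementary_gate_def by blast
lemma elem2: "a < q \<Longrightarrow> b < q \<Longrightarrow> a \<noteq> b \<Longrightarrow> unitary_mat 4 U \<Longrightarrow> elementary_gate q (two_qubit_gate q a b U)"
  unfolding elementary_gate_def by blast

lemma cnj_mult_self: "cmod \<phi> = 1 \<Longrightarrow> cnj \<phi> * \<phi> = 1"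
  using complex_norm_square[of \<phi>] by (simp add: mult.commute)

lemma unitary_CP: "cmod \<phi> = 1 \<Longrightarrow> unitary_mat 4 (CP \<phi>)"
  unfolding unitary_mat_def CP_def
  by (auto simp: numeral_eq_Suc less_Suc_eq cnj_mult_self)

lemma adjm_Hd: "adjm Hd = Hd" by (intro ext) (simp add: adjm_def Hd_def sq_props)
lemma adjm_CP: "adjm (CP \<phi>) = CP (cnj \<phi>)" by (intro ext) (simp add: adjm_def CP_def)

lemma cmod_zeta: "cmod (zeta n) = 1" by (simp add: zeta_def)

lemma LG_elem: "g \<in> set (LG n) \<Longrightarrow> elementary_gate (Suc n) g \<and> elementary_gate (Suc n) (adjm g)"
  by (auto simp: LG_def blockG_def Hg_def CPg_def adjm_one adjm_two adjm_Hd
     adjm_CP unitary_Hd norm_power cmod_zeta intro!: elem1 elem2 unitary_CP)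

lemma gsV_elem: "\<forall>R\<in>set Rs. unitary_mat 2 R \<Longrightarrow> g \<in> set (gsV n Rs) \<Longrightarrow> elementary_gate (Suc n) g"
  by (induction n Rs rule: gsV.induct)
     (auto simp: og_def cDg_def norm_power intro!: elem1 elem2 unitary_CP)

lemma length_LG: "length (LG n) \<le> n * n"
proof -
  have "length (LG n) = (\<Sum>b\<leftarrow>[0..<n]. Suc (n - Suc b))"
    by (simp add: LG_def length_concat blockG_def comp_def)
  also have "\<dots> = (\<Sum>b<n. Suc (n - Suc b))"
    by (subst sum.distinct_set_conv_list[symmetric]) (simp_all add: atLeast0LessThan)
  also have "\<dots> \<le> (\<Sum>b<n. n)" by (rule sum_mono) auto
  finally show ?thesis by simp
qed

theorem lemma2:
  shows "\<exists>A::real. \<forall>(n::nat) (d::nat) (c::nat \<Rightarrow> complex).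
     n \<ge> 1 \<longrightarrow> (\<exists>k\<le>d. c k \<noteq> 0) \<longrightarrow>
     (\<exists>gs. (\<forall>G\<in>set gs. elementary_gate (n + 1) G) \<and>
           real (length gs) \<le> A * (real d * real n + real n ^ 2) \<and>
           (\<forall>i j. i < 2 ^ n \<longrightarrow> j < 2 ^ n \<longrightarrow>
              circuit_matrix (n + 1) gs i j = circulant (2 ^ n) d c i j / circ_norm d c))"
proof (intro exI[of _ 3] allI impI)
  fix n d :: nat and c :: "nat \<Rightarrow> complex"
  assume n: "1 \<le> n" and c: "\<exists>k\<le>d. c k \<noteq> 0"
  define K where "K = circ_norm d c"
  have Kp: "K > 0" and Kb: "\<forall>z. cmod z = 1 \<longrightarrow> cmod (\<Sum>k\<le>d. c k * z^k) \<le> K"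
    using K_props[OF c] unfolding K_def by auto
  obtain Rs where Rs: "length Rs = Suc d" "\<forall>R\<in>set Rs. unitary_mat 2 R"
      "\<forall>z. cmod z = 1 \<longrightarrow> Wm Rs z 0 0 = (\<Sum>m\<le>d. c m * z^m) / complex_of_real K"
    using qsp_exists[OF Kp Kb] by blast
  have Rne: "Rs \<noteq> []" using Rs(1) by auto
  define gs where "gs = rev (LG n) @ gsV n Rs @ map adjm (LG n)"
  show "\<exists>gs. (\<forall>G\<in>set gs. elementary_gate (n + 1) G) \<and>
           real (length gs) \<le> 3 * (real d * real n + real n ^ 2) \<and>
           (\<forall>i j. i < 2 ^ n \<longrightarrow> j < 2 ^ n \<longrightarrow>
              circuit_matrix (n + 1) gs i j = circulant (2 ^ n) d c i j / circ_norm d c)"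
  proof (intro exI[of _ gs] conjI allI impI)
    show "\<forall>G\<in>set gs. elementary_gate (n + 1) G"
      unfolding gs_def using LG_elem gsV_elem[OF Rs(2)] by auto
    have "length gs \<le> n * n + (Suc d + d * n) + n * n"
      unfolding gs_def using length_LG[of n] length_gsV[of n Rs] Rs(1) by simp
    also have "\<dots> \<le> 3 * (d * n + n^2)"
    proof -
      have "d \<le> d * n" using n by simp
      moreover have "1 \<le> n * n" using n by simp
      ultimately show ?thesis unfolding power2_eq_square Suc_eq_plus1 distrib_left by linarith
    qed
    finally have "real (length gs) \<le> real (3 * (d * n + n^2))" by (rule of_nat_mono)
    then show "real (length gs) \<le> 3 * (real d * real n + real n ^ 2)" by simp
  next
    fix i j :: nat assume i: "i < 2^n" and j: "j < 2^n"
    have "circuit_matrix (n + 1) gs i j = circuit_matrix (Suc n) gs i j" by simp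
    also have "\<dots> = (\<Sum>k<2^n. zeta n ^ (i * rb n k) * Wm Rs (omega n ^ rb n k) 0 0 * cnj (zeta n ^ (j * rb n k)) / 2^n)"
      unfolding gs_def U_mat[OF n Rne] by (rule U_entry[OF n i j])
    also have "\<dots> = circulant (2^n) d c i j / K"
      by (rule final_sum[OF n i j Rs(3)])
    finally show "circuit_matrix (n + 1) gs i j = circulant (2 ^ n) d c i j / circ_norm d c"
      unfolding K_def .
  qed
qed


end
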